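(* Let $\mathsf G=\mathsf{SO}(5)$, $Q(A,B)=-\tfrac12\mathrm{tr}(AB)$ on $\mathfrak{so}(5)$, and $\mathsf H=\mathsf{SO}(2)$ the connected subgroup with Lie algebra $\mathfrak h=\mathrm{span}(E_{45})$, so that $\mathsf G/\mathsf H=V_3(\mathbb R^5)$. Let $\mathfrak m_1=\mathrm{span}(E_{23})$, $\mathfrak m_2=\mathrm{span}(E_{34},E_{35})$, $\mathfrak m_3=\mathrm{span}(E_{24},E_{25})$, $\mathfrak m_4=\mathrm{span}(E_{14},E_{15})$, $\mathfrak m_5=\mathrm{span}(E_{13})$, $\mathfrak m_6=\mathrm{span}(E_{12})$, and for $n\ge1$ let $$g^{(n)}=\tfrac1{4n^4}Q_{\mathfrak m_1}+Q_{\mathfrak m_2}+Q_{\mathfrak m_3}+nQ_{\mathfrak m_4}+2nQ_{\mathfrak m_5}+2nQ_{\mathfrak m_6}.$$ Then $(g^{(n)})$ is a diverging sequence in $\mathcal M^{\mathsf G}_1$ with bounded curvature, and $\mathrm{scal}(g^{(n)})=\frac{224n^6+288n^5-32n^4-8n^2-1}{32n^6}\to7$ as $n\to\infty$.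
   Context: $E_{ab}=e_ae_b^T-e_be_a^T\in\mathfrak{so}(5)$ for the standard basis $(e_1,\dots,e_5)$ of $\mathbb R^5$; these are $Q$-orthonormal. $\mathfrak m=\mathfrak m_1\oplus\dots\oplus\mathfrak m_6$ is the $Q$-orthogonal complement of $\mathfrak h$, $Q_{\mathfrak m_i}$ denotes $Q|_{\mathfrak m_i\times\mathfrak m_i}$ extended by zero, and $\mathsf{SO}(5)$-invariant metrics on $\mathsf{SO}(5)/\mathsf{SO}(2)$ are identified with $\mathrm{Ad}(\mathsf H)$-invariant inner products on $\mathfrak m$. $\mathcal M^{\mathsf G}_1$ is the set of invariant metrics with the same volume as $Q|_{\mathfrak m}$; diverging means not contained in any compact subset of $\mathcal M^{\mathsf G}_1$; bounded curvature means $|\sec(g^{(n)})|\le C$ uniformly in $n$ and over all $2$-planes. *)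

theory Defs
  imports "HOL-Analysis.Analysis" "HOL-Library.Numeral_Type"
begin

text \<open>The Lie algebra so(5) inside real 5x5 matrices; the standard basis
  e_1,...,e_5 of R^5 is indexed by the elements 1,2,3,4,5 of the numeral type 5.\<close>

definition Emat :: "5 \<Rightarrow> 5 \<Rightarrow> real^5^5" where
  "Emat a b = (\<chi> i j. (if i = a \<and> j = b then 1 else 0) - (if i = b \<and> j = a then 1 else 0))"

definition so5 :: "(real^5^5) set" where
  "so5 = {X. transpose X = - X}"

definition Qf :: "real^5^5 \<Rightarrow> real^5^5 \<Rightarrow> real" where
  "Qf A B = - (1/2) * trace (A ** B)"

definition brk :: "real^5^5 \<Rightarrow> real^5^5 \<Rightarrow> real^5^5" where
  "brk X Y = X ** Y - Y ** X"

text \<open>h = span(E_45); H = SO(2) = {exp(t E_45)} = rotations in the e_4,e_5 plane.\<close>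

definition hlie :: "(real^5^5) set" where
  "hlie = span {Emat 4 5}"

definition Hrot :: "real \<Rightarrow> real^5^5" where
  "Hrot t = (\<chi> i j. if i = 4 \<and> j = 4 then cos t else if i = 5 \<and> j = 5 then cos t
                    else if i = 4 \<and> j = 5 then sin t else if i = 5 \<and> j = 4 then - sin t
                    else if i = j then 1 else 0)"

definition Hgrp :: "(real^5^5) set" where
  "Hgrp = range Hrot"

definition Ad :: "real^5^5 \<Rightarrow> real^5^5 \<Rightarrow> real^5^5" where
  "Ad h X = h ** X ** matrix_inv h"

definition mspace :: "(real^5^5) set" where
  "mspace = {X \<in> so5. \<forall>Y \<in> hlie. Qf X Y = 0}"

definition projm :: "real^5^5 \<Rightarrow> real^5^5" where
  "projm X = X - Qf X (Emat 4 5) *\<^sub>R Emat 4 5"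

text \<open>The modules m_1,...,m_6, each given by its Q-orthonormal basis, and
  Q_{m_i} = Q restricted to m_i, extended by zero.\<close>

definition m1 :: "(real^5^5) set" where "m1 = {Emat 2 3}"
definition m2 :: "(real^5^5) set" where "m2 = {Emat 3 4, Emat 3 5}"
definition m3 :: "(real^5^5) set" where "m3 = {Emat 2 4, Emat 2 5}"
definition m4 :: "(real^5^5) set" where "m4 = {Emat 1 4, Emat 1 5}"
definition m5 :: "(real^5^5) set" where "m5 = {Emat 1 3}"
definition m6 :: "(real^5^5) set" where "m6 = {Emat 1 2}"

definition Qsub :: "(real^5^5) set \<Rightarrow> real^5^5 \<Rightarrow> real^5^5 \<Rightarrow> real" where
  "Qsub B X Y = (\<Sum>b\<in>B. Qf b X * Qf b Y)"

text \<open>A fixed Q-orthonormal basis of m, indexed by the numeral type 9. Ad(H)-invariant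
  inner products on m are represented by their Gram matrices (real^9^9) in this basis;
  this gives the topology on the space of invariant metrics.\<close>

definition mb :: "9 \<Rightarrow> real^5^5" where
  "mb i = (if i = 0 then Emat 2 3 else if i = 1 then Emat 3 4 else if i = 2 then Emat 3 5
           else if i = 3 then Emat 2 4 else if i = 4 then Emat 2 5 else if i = 5 then Emat 1 4
           else if i = 6 then Emat 1 5 else if i = 7 then Emat 1 3 else Emat 1 2)"

definition gform :: "real^9^9 \<Rightarrow> real^5^5 \<Rightarrow> real^5^5 \<Rightarrow> real" where
  "gform P X Y = (\<Sum>i\<in>UNIV. \<Sum>j\<in>UNIV. Qf (mb i) X * P $ i $ j * Qf (mb j) Y)"

definition gram :: "(real^5^5 \<Rightarrow> real^5^5 \<Rightarrow> real) \<Rightarrow> real^9^9" where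
  "gram B = (\<chi> i j. B (mb i) (mb j))"

text \<open>SO(5)-invariant metrics on SO(5)/SO(2) = Ad(H)-invariant inner products on m.\<close>

definition InvMetrics :: "(real^9^9) set" where
  "InvMetrics = {P. transpose P = P \<and> (\<forall>v. v \<noteq> 0 \<longrightarrow> v \<bullet> (P *v v) > 0) \<and>
      (\<forall>h\<in>Hgrp. \<forall>X\<in>mspace. \<forall>Y\<in>mspace. gform P (Ad h X) (Ad h Y) = gform P X Y)}"

text \<open>Same volume as Q|_m: since mb is Q-orthonormal, the volume ratio is sqrt(det P).\<close>

definition M1 :: "(real^9^9) set" where
  "M1 = {P \<in> InvMetrics. det P = 1}"

text \<open>The tensor U (Besse, Einstein Manifolds, 7.27) and the curvature formula
  for reductive homogeneous spaces (Besse 7.30).\<close>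

definition Uop :: "real^9^9 \<Rightarrow> real^5^5 \<Rightarrow> real^5^5 \<Rightarrow> real^5^5" where
  "Uop P X Y = (THE u. u \<in> mspace \<and> (\<forall>Z\<in>mspace.
      2 * gform P u Z = gform P (projm (brk Z X)) Y + gform P X (projm (brk Z Y))))"

definition curvnum :: "real^9^9 \<Rightarrow> real^5^5 \<Rightarrow> real^5^5 \<Rightarrow> real" where
  "curvnum P X Y =
     - (3/4) * gform P (projm (brk X Y)) (projm (brk X Y))
     - (1/2) * gform P (projm (brk X (brk X Y))) Y
     - (1/2) * gform P (projm (brk Y (brk Y X))) X
     + gform P (Uop P X Y) (Uop P X Y) - gform P (Uop P X X) (Uop P Y Y)"

definition seccurv :: "real^9^9 \<Rightarrow> real^5^5 \<Rightarrow> real^5^5 \<Rightarrow> real" where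
  "seccurv P X Y = curvnum P X Y / (gform P X X * gform P Y Y - (gform P X Y)^2)"

definition is_onb :: "real^9^9 \<Rightarrow> (9 \<Rightarrow> real^5^5) \<Rightarrow> bool" where
  "is_onb P f \<longleftrightarrow> (\<forall>i. f i \<in> mspace) \<and> (\<forall>i j. gform P (f i) (f j) = (if i = j then 1 else 0))"

text \<open>Scalar curvature = sum of sectional curvatures over ordered pairs of distinct
  vectors of a g-orthonormal basis of m (independent of the basis chosen).\<close>

definition scal :: "real^9^9 \<Rightarrow> real" where
  "scal P = (let f = (SOME f. is_onb P f) in
      (\<Sum>i\<in>UNIV. \<Sum>j\<in>UNIV. if i \<noteq> j then seccurv P (f i) (f j) else 0))"

definition gseq :: "nat \<Rightarrow> real^9^9" where
  "gseq n = gram (\<lambda>X Y. 1 / (4 * real n ^ 4) * Qsub m1 X Y + Qsub m2 X Y + Qsub m3 X Y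
                        + real n * Qsub m4 X Y + 2 * real n * Qsub m5 X Y + 2 * real n * Qsub m6 X Y)"

end

theory Submission
  imports Defs "HOL-Real_Asymp.Real_Asymp"
begin

lemma exhaust_9: fixes x :: 9 shows "x = 0 \<or> x = 1 \<or> x = 2 \<or> x = 3 \<or> x = 4 \<or> x = 5 \<or> x = 6 \<or> x = 7 \<or> x = 8"
proof (induct x)
  case (of_int z)
  then have "z = 0 \<or> z = 1 \<or> z = 2 \<or> z = 3 \<or> z = 4 \<or> z = 5 \<or> z = 6 \<or> z = 7 \<or> z = 8" by fastforce
  then show ?case by auto
qed
lemma U9: "(UNIV::9 set) = {0,1,2,3,4,5,6,7,8}" using exhaust_9 by auto
lemma exhaust_5: fixes x :: 5 shows "x = 1 \<or> x = 2 \<or> x = 3 \<or> x = 4 \<or> x = 5"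
proof (induct x)
  case (of_int z)
  then have "z = 0 \<or> z = 1 \<or> z = 2 \<or> z = 3 \<or> z = 4" by fastforce
  then show ?case by auto
qed
lemma U5: "(UNIV::5 set) = {1,2,3,4,5}" using exhaust_5 by auto
lemma sum5: "(\<Sum>k\<in>(UNIV::5 set). f k) = f 1 + f 2 + f 3 + f 4 + f 5"
  unfolding U5 by (simp add: ac_simps)
lemma sum9: "(\<Sum>k\<in>(UNIV::9 set). f k) = f 0 + f 1 + f 2 + f 3 + f 4 + f 5 + f 6 + f 7 + f 8"
  unfolding U9 by (simp add: ac_simps)
lemma all5: "(\<forall>k::5. P k) \<longleftrightarrow> P 1 \<and> P 2 \<and> P 3 \<and> P 4 \<and> P 5"
proof -
  have "(\<forall>k::5. P k) \<longleftrightarrow> (\<forall>k\<in>(UNIV::5 set). P k)" by simp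
  also have "\<dots> \<longleftrightarrow> (\<forall>k\<in>{1,2,3,4,5}. P k)" by (simp only: U5)
  finally show ?thesis by simp
qed
lemma all9: "(\<forall>k::9. P k) \<longleftrightarrow> P 0 \<and> P 1 \<and> P 2 \<and> P 3 \<and> P 4 \<and> P 5 \<and> P 6 \<and> P 7 \<and> P 8"
proof -
  have "(\<forall>k::9. P k) \<longleftrightarrow> (\<forall>k\<in>(UNIV::9 set). P k)" by simp
  also have "\<dots> \<longleftrightarrow> (\<forall>k\<in>{0,1,2,3,4,5,6,7,8}. P k)" by (simp only: U9)
  finally show ?thesis by simp
qed

definition sent :: "(9 \<Rightarrow> real) \<Rightarrow> real \<Rightarrow> 5 \<Rightarrow> 5 \<Rightarrow> real" where
  "sent c e a b = (if a = 1 \<and> b = 2 then c 8 else if a = 2 \<and> b = 1 then - c 8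
    else if a = 1 \<and> b = 3 then c 7 else if a = 3 \<and> b = 1 then - c 7
    else if a = 1 \<and> b = 4 then c 5 else if a = 4 \<and> b = 1 then - c 5
    else if a = 1 \<and> b = 5 then c 6 else if a = 5 \<and> b = 1 then - c 6
    else if a = 2 \<and> b = 3 then c 0 else if a = 3 \<and> b = 2 then - c 0
    else if a = 2 \<and> b = 4 then c 3 else if a = 4 \<and> b = 2 then - c 3
    else if a = 2 \<and> b = 5 then c 4 else if a = 5 \<and> b = 2 then - c 4
    else if a = 3 \<and> b = 4 then c 1 else if a = 4 \<and> b = 3 then - c 1
    else if a = 3 \<and> b = 5 then c 2 else if a = 5 \<and> b = 3 then - c 2
    else if a = 4 \<and> b = 5 then e else if a = 5 \<and> b = 4 then - e else 0)"

definition S :: "(9 \<Rightarrow> real) \<Rightarrow> real \<Rightarrow> real^5^5" where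
  "S c e = (\<chi> a b. sent c e a b)"

lemma S_nth[simp]: "S c e $ a $ b = sent c e a b"
  by (simp add: S_def)

definition v9 :: "real \<Rightarrow> real \<Rightarrow> real \<Rightarrow> real \<Rightarrow> real \<Rightarrow> real \<Rightarrow> real \<Rightarrow> real \<Rightarrow> real \<Rightarrow> 9 \<Rightarrow> real" where
  "v9 a0 a1 a2 a3 a4 a5 a6 a7 a8 = (\<lambda>i. if i = 0 then a0 else if i = 1 then a1 else if i = 2 then a2
     else if i = 3 then a3 else if i = 4 then a4 else if i = 5 then a5 else if i = 6 then a6
     else if i = 7 then a7 else a8)"

lemma v9_simps[simp]: "v9 a0 a1 a2 a3 a4 a5 a6 a7 a8 0 = a0" "v9 a0 a1 a2 a3 a4 a5 a6 a7 a8 1 = a1"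
  "v9 a0 a1 a2 a3 a4 a5 a6 a7 a8 2 = a2" "v9 a0 a1 a2 a3 a4 a5 a6 a7 a8 3 = a3"
  "v9 a0 a1 a2 a3 a4 a5 a6 a7 a8 4 = a4" "v9 a0 a1 a2 a3 a4 a5 a6 a7 a8 5 = a5"
  "v9 a0 a1 a2 a3 a4 a5 a6 a7 a8 6 = a6" "v9 a0 a1 a2 a3 a4 a5 a6 a7 a8 7 = a7"
  "v9 a0 a1 a2 a3 a4 a5 a6 a7 a8 8 = a8"
  by (simp_all add: v9_def)

lemma S_eqI: "(\<And>a b. A $ a $ b = B $ a $ b) \<Longrightarrow> A = B"
  by (simp add: vec_eq_iff)

lemma mat_entry: "(A ** B) $ i $ j = (\<Sum>k\<in>UNIV. A $ i $ k * B $ k $ j)"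
  by (simp add: matrix_matrix_mult_def)

lemma sent_simps[simp]:
  "sent c e 1 1 = 0"
  "sent c e 1 2 = c 8"
  "sent c e 1 3 = c 7"
  "sent c e 1 4 = c 5"
  "sent c e 1 5 = c 6"
  "sent c e 2 1 = - c 8"
  "sent c e 2 2 = 0"
  "sent c e 2 3 = c 0"
  "sent c e 2 4 = c 3"
  "sent c e 2 5 = c 4"
  "sent c e 3 1 = - c 7"
  "sent c e 3 2 = - c 0"
  "sent c e 3 3 = 0"
  "sent c e 3 4 = c 1"
  "sent c e 3 5 = c 2"
  "sent c e 4 1 = - c 5"
  "sent c e 4 2 = - c 3"
  "sent c e 4 3 = - c 1"
  "sent c e 4 4 = 0"
  "sent c e 4 5 = e"
  "sent c e 5 1 = - c 6"
  "sent c e 5 2 = - c 4"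
  "sent c e 5 3 = - c 2"
  "sent c e 5 4 = - e"
  "sent c e 5 5 = 0"
  by (simp_all add: sent_def)lemma brk_S: "brk (S c e) (S c' e') = S (v9 ((c 1) * (c' 3) + (c 2) * (c' 4) - (c 3) * (c' 1) - (c 4) * (c' 2) + (c 7) * (c' 8) - (c 8) * (c' 7)) (- (c 0) * (c' 3) - (c 2) * e' + (c 3) * (c' 0) + (c 5) * (c' 7) - (c 7) * (c' 5) + (c' 2) * e) (- (c 0) * (c' 4) + (c 1) * e' + (c 4) * (c' 0) + (c 6) * (c' 7) - (c 7) * (c' 6) - (c' 1) * e) ((c 0) * (c' 1) - (c 1) * (c' 0) - (c 4) * e' + (c 5) * (c' 8) - (c 8) * (c' 5) + (c' 4) * e) ((c 0) * (c' 2) - (c 2) * (c' 0) + (c 3) * e' + (c 6) * (c' 8) - (c 8) * (c' 6) - (c' 3) * e) (- (c 1) * (c' 7) - (c 3) * (c' 8) - (c 6) * e' + (c 7) * (c' 1) + (c 8) * (c' 3) + (c' 6) * e) (- (c 2) * (c' 7) - (c 4) * (c' 8) + (c 5) * e' + (c 7) * (c' 2) + (c 8) * (c' 4) - (c' 5) * e) (- (c 0) * (c' 8) + (c 1) * (c' 5) + (c 2) * (c' 6) - (c 5) * (c' 1) - (c 6) * (c' 2) + (c 8) * (c' 0)) ((c 0) * (c' 7) + (c 3) * (c' 5) + (c 4) * (c' 6) - (c 5) * (c' 3) - (c 6) * (c' 4) - (c 7) * (c' 0))) (- (c 1) * (c' 2) + (c 2) * (c' 1) - (c 3) * (c' 4)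 + (c 4) * (c' 3) - (c 5) * (c' 6) + (c 6) * (c' 5))"
  unfolding vec_eq_iff all5 by (simp add: brk_def mat_entry sum5 algebra_simps)

definition ev :: "9 \<Rightarrow> 9 \<Rightarrow> real" where "ev i = (\<lambda>k. if k = i then 1 else 0)"

lemma Qf_S: "Qf (S c e) (S c' e') = c 0 * c' 0 + c 1 * c' 1 + c 2 * c' 2 + c 3 * c' 3 + c 4 * c' 4
   + c 5 * c' 5 + c 6 * c' 6 + c 7 * c' 7 + c 8 * c' 8 + e * e'"
  by (simp add: Qf_def trace_def mat_entry sum5 algebra_simps)

lemma mb_S: "mb 0 = S (ev 0) 0" "mb 1 = S (ev 1) 0" "mb 2 = S (ev 2) 0" "mb 3 = S (ev 3) 0"
  "mb 4 = S (ev 4) 0" "mb 5 = S (ev 5) 0" "mb 6 = S (ev 6) 0" "mb 7 = S (ev 7) 0" "mb 8 = S (ev 8) 0"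
  unfolding vec_eq_iff all5 by (simp_all add: mb_def Emat_def ev_def)

lemma E45_S: "Emat 4 5 = S (\<lambda>_. 0) 1"
  unfolding vec_eq_iff all5 by (simp add: Emat_def)

lemma mbi_S: "mb i = S (ev i) 0"
  using exhaust_9[of i] mb_S by auto

lemma Qf_mb_S: "Qf (mb k) (S c e) = c k"
  using exhaust_9[of k] by (auto simp: mbi_S Qf_S ev_def)

lemma Qf_E45_S: "Qf (S c e) (Emat 4 5) = e"
  by (simp add: E45_S Qf_S)

lemma projm_S: "projm (S c e) = S c 0"
  unfolding projm_def Qf_E45_S unfolding E45_S vec_eq_iff all5 by simp


definition dd :: "real \<Rightarrow> 9 \<Rightarrow> real" where
  "dd t = v9 ((1/t)^4/4) 1 1 1 1 t t (2*t) (2*t)"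

lemma Emat_mb: "Emat 2 3 = mb 0" "Emat 3 4 = mb 1" "Emat 3 5 = mb 2" "Emat 2 4 = mb 3" "Emat 2 5 = mb 4"
   "Emat 1 4 = mb 5" "Emat 1 5 = mb 6" "Emat 1 3 = mb 7" "Emat 1 2 = mb 8"
  by (simp_all add: mb_def)

lemma mb_neq: "mb 1 \<noteq> mb 2" "mb 3 \<noteq> mb 4" "mb 5 \<noteq> mb 6"
  by (simp_all add: mb_S vec_eq_iff all5 ev_def)

lemma Qsub_eqs:
  "Qsub m1 X Y = Qf (mb 0) X * Qf (mb 0) Y"
  "Qsub m2 X Y = Qf (mb 1) X * Qf (mb 1) Y + Qf (mb 2) X * Qf (mb 2) Y"
  "Qsub m3 X Y = Qf (mb 3) X * Qf (mb 3) Y + Qf (mb 4) X * Qf (mb 4) Y"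
  "Qsub m4 X Y = Qf (mb 5) X * Qf (mb 5) Y + Qf (mb 6) X * Qf (mb 6) Y"
  "Qsub m5 X Y = Qf (mb 7) X * Qf (mb 7) Y"
  "Qsub m6 X Y = Qf (mb 8) X * Qf (mb 8) Y"
  by (simp_all add: Qsub_def m1_def m2_def m3_def m4_def m5_def m6_def Emat_mb mb_neq)


lemma gseq_entry: "gseq n $ i $ j = (if i = j then dd (real n) i else 0)"
proof -
  have "gseq n $ i $ j = 1 / (4 * real n ^ 4) * (ev i 0 * ev j 0) + (ev i 1 * ev j 1 + ev i 2 * ev j 2)
     + (ev i 3 * ev j 3 + ev i 4 * ev j 4) + real n * (ev i 5 * ev j 5 + ev i 6 * ev j 6)
     + 2 * real n * (ev i 7 * ev j 7) + 2 * real n * (ev i 8 * ev j 8)"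
    by (simp add: gseq_def gram_def Qsub_eqs mbi_S[of i] mbi_S[of j] Qf_mb_S)
  then show ?thesis
    using exhaust_9[of i] by (auto simp: ev_def dd_def power_one_over)
qed


lemma gform_gseq: "gform (gseq n) X Y = (\<Sum>i\<in>UNIV. dd (real n) i * Qf (mb i) X * Qf (mb i) Y)"
proof -
  have "gform (gseq n) X Y = (\<Sum>i\<in>UNIV. \<Sum>j\<in>UNIV. (if j = i then Qf (mb i) X * dd (real n) i * Qf (mb j) Y else 0))"
    unfolding gform_def gseq_entry by (intro sum.cong refl) (auto intro: sum.cong)
  also have "\<dots> = (\<Sum>i\<in>UNIV. dd (real n) i * Qf (mb i) X * Qf (mb i) Y)"
    by (simp add: sum.delta algebra_simps)
  finally show ?thesis .
qed

lemma gform_S: "gform (gseq n) (S c e) (S c' e') =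
   dd (real n) 0 * c 0 * c' 0 + dd (real n) 1 * c 1 * c' 1 + dd (real n) 2 * c 2 * c' 2 +
   dd (real n) 3 * c 3 * c' 3 + dd (real n) 4 * c 4 * c' 4 + dd (real n) 5 * c 5 * c' 5 +
   dd (real n) 6 * c 6 * c' 6 + dd (real n) 7 * c 7 * c' 7 + dd (real n) 8 * c 8 * c' 8"
  by (simp add: gform_gseq sum9 Qf_mb_S)

lemma S_scale: "k *\<^sub>R S c e = S (\<lambda>i. k * c i) (k * e)"
  unfolding vec_eq_iff all5 by simp

lemma S_diff: "S c e - S c' e' = S (\<lambda>i. c i - c' i) (e - e')"
  unfolding vec_eq_iff all5 by simp

lemma S_in_mspace: "S c 0 \<in> mspace"
proof -
  have "S c 0 \<in> so5" unfolding so5_def transpose_def vec_eq_iff all5 by simp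
  moreover have "\<forall>Y\<in>hlie. Qf (S c 0) Y = 0"
  proof
    fix Y assume "Y \<in> hlie"
    then obtain k where "Y = k *\<^sub>R Emat 4 5" unfolding hlie_def span_singleton by auto
    then show "Qf (S c 0) Y = 0" by (simp add: E45_S S_scale Qf_S)
  qed
  ultimately show ?thesis unfolding mspace_def by simp
qed

lemma mspace_S: assumes "X \<in> mspace" shows "X = S (v9 (X$2$3) (X$3$4) (X$3$5) (X$2$4) (X$2$5) (X$1$4) (X$1$5) (X$1$3) (X$1$2)) 0"
proof -
  have so: "transpose X = - X" and q: "Qf X (Emat 4 5) = 0"
    using assms unfolding mspace_def so5_def hlie_def by (auto intro: span_base)
  have A: "\<And>i j. X $ j $ i = - X $ i $ j"
  proof -
    fix i j
    from so have "transpose X $ i $ j = (- X) $ i $ j" by simp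
    then show "X $ j $ i = - X $ i $ j" by (simp add: transpose_def)
  qed
  have D: "X $ i $ i = 0" for i using A[of i i] by simp
  have q': "Qf X (Emat 4 5) = X $ 4 $ 5"
    unfolding Qf_def trace_def mat_entry sum5 by (simp add: Emat_def A[of 4 5] D)
  have "X $ 4 $ 5 = 0" using q q' by simp
  then show ?thesis unfolding vec_eq_iff all5 by (simp add: D A[of 1 2] A[of 1 3] A[of 1 4] A[of 1 5]
    A[of 2 3] A[of 2 4] A[of 2 5] A[of 3 4] A[of 3 5] A[of 4 5])
qed

lemma mspace_iff: "X \<in> mspace \<longleftrightarrow> (\<exists>c. X = S c 0)"
  using mspace_S S_in_mspace by blast


lemma dd_pos: "t > 0 \<Longrightarrow> dd t k > 0"
  using exhaust_9[of k] by (auto simp: dd_def)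

lemma gform_ev: "gform (gseq n) (S w 0) (S (ev k) 0) = dd (real n) k * w k"
  by (simp add: gform_gseq Qf_mb_S ev_def if_distrib cong: if_cong)

lemma the_U:
  assumes n: "n \<ge> 1" and H: "S w 0 \<in> mspace \<and> (\<forall>Z\<in>mspace. 2 * gform (gseq n) (S w 0) Z = R Z)"
  shows "(THE u. u \<in> mspace \<and> (\<forall>Z\<in>mspace. 2 * gform (gseq n) u Z = R Z)) = S w 0"
proof (rule the_equality)
  show "S w 0 \<in> mspace \<and> (\<forall>Z\<in>mspace. 2 * gform (gseq n) (S w 0) Z = R Z)" by (rule H)
next
  fix u assume Hu: "u \<in> mspace \<and> (\<forall>Z\<in>mspace. 2 * gform (gseq n) u Z = R Z)"
  then obtain w' where u: "u = S w' 0" using mspace_iff by blast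
  have "w' k = w k" for k
  proof -
    have "2 * gform (gseq n) (S w' 0) (S (ev k) 0) = 2 * gform (gseq n) (S w 0) (S (ev k) 0)"
      using Hu H S_in_mspace u by metis
    then have "dd (real n) k * w' k = dd (real n) k * w k" by (simp add: gform_ev)
    moreover have "dd (real n) k > 0" using n dd_pos by simp
    ultimately show ?thesis by simp
  qed
  then have "w' = w" by (simp add: fun_eq_iff)
  then show "u = S w 0" using u by simp
qed


lemma Uop_S: assumes n: "n \<ge> 1"
  shows "Uop (gseq n) (S x 0) (S y 0) = S (v9 (0) (((1/2)*(real n))*(x 7)*(y 5) + ((1/2)*(real n))*(x 5)*(y 7) + (- (1/2) + (1/8)*(1/real n)^4)*(x 3)*(y 0) + (- (1/2) + (1/8)*(1/real n)^4)*(x 0)*(y 3)) (((1/2)*(real n))*(x 7)*(y 6) + ((1/2)*(real n))*(x 6)*(y 7) + (- (1/2) + (1/8)*(1/real n)^4)*(x 4)*(y 0) + (- (1/2) + (1/8)*(1/real n)^4)*(x 0)*(y 4)) (((1/2)*(real n))*(x 8)*(y 5) + ((1/2)*(real n))*(x 5)*(y 8) + ((1/2) - (1/8)*(1/real n)^4)*(x 1)*(y 0) + ((1/2) - (1/8)*(1/real n)^4)*(x 0)*(y 1)) (((1/2)*(real n))*(x 8)*(y 6) + ((1/2)*(real n))*(x 6)*(y 8) + ((1/2) - (1/8)*(1/real n)^4)*(x 2)*(y 0) + ((1/2) - (1/8)*(1/real n)^4)*(x 0)*(y 2)) ((- 1 + (1/2)*(1/real n))*(x 8)*(y 3) + (-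 1 + (1/2)*(1/real n))*(x 7)*(y 1) + (- 1 + (1/2)*(1/real n))*(x 3)*(y 8) + (- 1 + (1/2)*(1/real n))*(x 1)*(y 7)) ((- 1 + (1/2)*(1/real n))*(x 8)*(y 4) + (- 1 + (1/2)*(1/real n))*(x 7)*(y 2) + (- 1 + (1/2)*(1/real n))*(x 4)*(y 8) + (- 1 + (1/2)*(1/real n))*(x 2)*(y 7)) ((- (1/2) + (1/16)*(1/real n)^5)*(x 8)*(y 0) + ((1/4) - (1/4)*(1/real n))*(x 6)*(y 2) + ((1/4) - (1/4)*(1/real n))*(x 5)*(y 1) + ((1/4) - (1/4)*(1/real n))*(x 2)*(y 6) + ((1/4) - (1/4)*(1/real n))*(x 1)*(y 5) + (- (1/2) + (1/16)*(1/real n)^5)*(x 0)*(y 8)) (((1/2) - (1/16)*(1/real n)^5)*(x 7)*(y 0) + ((1/4) - (1/4)*(1/real n))*(x 6)*(y 4) + ((1/4) - (1/4)*(1/real n))*(x 5)*(y 3) + ((1/4) - (1/4)*(1/real n))*(x 4)*(y 6) + ((1/4) - (1/4)*(1/real n))*(x 3)*(y 5) + ((1/2) - (1/16)*(1/real n)^5)*(x 0)*(y 7))) 0"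
  unfolding Uop_def
proof (rule the_U[OF n])
  define t where "t = real n"
  define m where "m = 1 / t"
  have tm: "t * m = 1" using n unfolding m_def t_def by simp
  show "S (v9 (0) (((1/2)*(real n))*(x 7)*(y 5) + ((1/2)*(real n))*(x 5)*(y 7) + (- (1/2) + (1/8)*(1/real n)^4)*(x 3)*(y 0) + (- (1/2) + (1/8)*(1/real n)^4)*(x 0)*(y 3)) (((1/2)*(real n))*(x 7)*(y 6) + ((1/2)*(real n))*(x 6)*(y 7) + (- (1/2) + (1/8)*(1/real n)^4)*(x 4)*(y 0) + (- (1/2) + (1/8)*(1/real n)^4)*(x 0)*(y 4)) (((1/2)*(real n))*(x 8)*(y 5) + ((1/2)*(real n))*(x 5)*(y 8) + ((1/2) - (1/8)*(1/real n)^4)*(x 1)*(y 0) + ((1/2) - (1/8)*(1/real n)^4)*(x 0)*(y 1)) (((1/2)*(real n))*(x 8)*(y 6) + ((1/2)*(real n))*(x 6)*(y 8) + ((1/2) - (1/8)*(1/real n)^4)*(x 2)*(y 0) + ((1/2) - (1/8)*(1/real n)^4)*(x 0)*(y 2)) ((- 1 + (1/2)*(1/real n))*(x 8)*(y 3) + (- 1 + (1/2)*(1/real n))*(x 7)*(y 1) + (- 1 + (1/2)*(1/real n))*(x 3)*(y 8) + (- 1 + (1/2)*(1/real n))*(x 1)*(y 7)) ((- 1 + (1/2)*(1/real n))*(x 8)*(y 4) + (- 1 + (1/2)*(1/real n))*(x 7)*(y 2) + (- 1 + (1/2)*(1/real n))*(x 4)*(y 8) + (- 1 + (1/2)*(1/real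 n))*(x 2)*(y 7)) ((- (1/2) + (1/16)*(1/real n)^5)*(x 8)*(y 0) + ((1/4) - (1/4)*(1/real n))*(x 6)*(y 2) + ((1/4) - (1/4)*(1/real n))*(x 5)*(y 1) + ((1/4) - (1/4)*(1/real n))*(x 2)*(y 6) + ((1/4) - (1/4)*(1/real n))*(x 1)*(y 5) + (- (1/2) + (1/16)*(1/real n)^5)*(x 0)*(y 8)) (((1/2) - (1/16)*(1/real n)^5)*(x 7)*(y 0) + ((1/4) - (1/4)*(1/real n))*(x 6)*(y 4) + ((1/4) - (1/4)*(1/real n))*(x 5)*(y 3) + ((1/4) - (1/4)*(1/real n))*(x 4)*(y 6) + ((1/4) - (1/4)*(1/real n))*(x 3)*(y 5) + ((1/2) - (1/16)*(1/real n)^5)*(x 0)*(y 7))) 0 \<in> mspace \<and> (\<forall>Z\<in>mspace. 2 * gform (gseq n) (S (v9 (0) (((1/2)*(real n))*(x 7)*(y 5) + ((1/2)*(real n))*(x 5)*(y 7) + (- (1/2) + (1/8)*(1/real n)^4)*(x 3)*(y 0) + (- (1/2) + (1/8)*(1/real n)^4)*(x 0)*(y 3)) (((1/2)*(real n))*(x 7)*(y 6) + ((1/2)*(real n))*(x 6)*(y 7) + (- (1/2) + (1/8)*(1/real n)^4)*(x 4)*(y 0) + (- (1/2) + (1/8)*(1/real n)^4)*(x 0)*(y 4)) (((1/2)*(real n))*(x 8)*(y 5) + ((1/2)*(real n))*(x 5)*(y 8) + ((1/2) - (1/8)*(1/real n)^4)*(x 1)*(y 0) + ((1/2) - (1/8)*(1/real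 n)^4)*(x 0)*(y 1)) (((1/2)*(real n))*(x 8)*(y 6) + ((1/2)*(real n))*(x 6)*(y 8) + ((1/2) - (1/8)*(1/real n)^4)*(x 2)*(y 0) + ((1/2) - (1/8)*(1/real n)^4)*(x 0)*(y 2)) ((- 1 + (1/2)*(1/real n))*(x 8)*(y 3) + (- 1 + (1/2)*(1/real n))*(x 7)*(y 1) + (- 1 + (1/2)*(1/real n))*(x 3)*(y 8) + (- 1 + (1/2)*(1/real n))*(x 1)*(y 7)) ((- 1 + (1/2)*(1/real n))*(x 8)*(y 4) + (- 1 + (1/2)*(1/real n))*(x 7)*(y 2) + (- 1 + (1/2)*(1/real n))*(x 4)*(y 8) + (- 1 + (1/2)*(1/real n))*(x 2)*(y 7)) ((- (1/2) + (1/16)*(1/real n)^5)*(x 8)*(y 0) + ((1/4) - (1/4)*(1/real n))*(x 6)*(y 2) + ((1/4) - (1/4)*(1/real n))*(x 5)*(y 1) + ((1/4) - (1/4)*(1/real n))*(x 2)*(y 6) + ((1/4) - (1/4)*(1/real n))*(x 1)*(y 5) + (- (1/2) + (1/16)*(1/real n)^5)*(x 0)*(y 8)) (((1/2) - (1/16)*(1/real n)^5)*(x 7)*(y 0) + ((1/4) - (1/4)*(1/real n))*(x 6)*(y 4) + ((1/4) - (1/4)*(1/real n))*(x 5)*(y 3) + ((1/4) - (1/4)*(1/real n))*(x 4)*(y 6) + ((1/4) - (1/4)*(1/real n))*(x 3)*(y 5) + ((1/2) - (1/16)*(1/real n)^5)*(x 0)*(y 7))) 0) Z =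
     gform (gseq n) (projm (brk Z (S x 0))) (S y 0) + gform (gseq n) (S x 0) (projm (brk Z (S y 0))))"
  proof (intro conjI ballI)
    show "S (v9 (0) (((1/2)*(real n))*(x 7)*(y 5) + ((1/2)*(real n))*(x 5)*(y 7) + (- (1/2) + (1/8)*(1/real n)^4)*(x 3)*(y 0) + (- (1/2) + (1/8)*(1/real n)^4)*(x 0)*(y 3)) (((1/2)*(real n))*(x 7)*(y 6) + ((1/2)*(real n))*(x 6)*(y 7) + (- (1/2) + (1/8)*(1/real n)^4)*(x 4)*(y 0) + (- (1/2) + (1/8)*(1/real n)^4)*(x 0)*(y 4)) (((1/2)*(real n))*(x 8)*(y 5) + ((1/2)*(real n))*(x 5)*(y 8) + ((1/2) - (1/8)*(1/real n)^4)*(x 1)*(y 0) + ((1/2) - (1/8)*(1/real n)^4)*(x 0)*(y 1)) (((1/2)*(real n))*(x 8)*(y 6) + ((1/2)*(real n))*(x 6)*(y 8) + ((1/2) - (1/8)*(1/real n)^4)*(x 2)*(y 0) + ((1/2) - (1/8)*(1/real n)^4)*(x 0)*(y 2)) ((- 1 + (1/2)*(1/real n))*(x 8)*(y 3) + (- 1 + (1/2)*(1/real n))*(x 7)*(y 1) + (- 1 + (1/2)*(1/real n))*(x 3)*(y 8) + (- 1 + (1/2)*(1/real n))*(x 1)*(y 7)) ((- 1 + (1/2)*(1/real n))*(x 8)*(y 4) + (- 1 + (1/2)*(1/real n))*(x 7)*(y 2) + (- 1 + (1/2)*(1/real n))*(x 4)*(y 8) + (- 1 + (1/2)*(1/real n))*(x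 2)*(y 7)) ((- (1/2) + (1/16)*(1/real n)^5)*(x 8)*(y 0) + ((1/4) - (1/4)*(1/real n))*(x 6)*(y 2) + ((1/4) - (1/4)*(1/real n))*(x 5)*(y 1) + ((1/4) - (1/4)*(1/real n))*(x 2)*(y 6) + ((1/4) - (1/4)*(1/real n))*(x 1)*(y 5) + (- (1/2) + (1/16)*(1/real n)^5)*(x 0)*(y 8)) (((1/2) - (1/16)*(1/real n)^5)*(x 7)*(y 0) + ((1/4) - (1/4)*(1/real n))*(x 6)*(y 4) + ((1/4) - (1/4)*(1/real n))*(x 5)*(y 3) + ((1/4) - (1/4)*(1/real n))*(x 4)*(y 6) + ((1/4) - (1/4)*(1/real n))*(x 3)*(y 5) + ((1/2) - (1/16)*(1/real n)^5)*(x 0)*(y 7))) 0 \<in> mspace" by (rule S_in_mspace)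
    fix Z assume "Z \<in> mspace"
    then obtain z where Z: "Z = S z 0" using mspace_iff by blast
    show "2 * gform (gseq n) (S (v9 (0) (((1/2)*(real n))*(x 7)*(y 5) + ((1/2)*(real n))*(x 5)*(y 7) + (- (1/2) + (1/8)*(1/real n)^4)*(x 3)*(y 0) + (- (1/2) + (1/8)*(1/real n)^4)*(x 0)*(y 3)) (((1/2)*(real n))*(x 7)*(y 6) + ((1/2)*(real n))*(x 6)*(y 7) + (- (1/2) + (1/8)*(1/real n)^4)*(x 4)*(y 0) + (- (1/2) + (1/8)*(1/real n)^4)*(x 0)*(y 4)) (((1/2)*(real n))*(x 8)*(y 5) + ((1/2)*(real n))*(x 5)*(y 8) + ((1/2) - (1/8)*(1/real n)^4)*(x 1)*(y 0) + ((1/2) - (1/8)*(1/real n)^4)*(x 0)*(y 1)) (((1/2)*(real n))*(x 8)*(y 6) + ((1/2)*(real n))*(x 6)*(y 8) + ((1/2) - (1/8)*(1/real n)^4)*(x 2)*(y 0) + ((1/2) - (1/8)*(1/real n)^4)*(x 0)*(y 2)) ((- 1 + (1/2)*(1/real n))*(x 8)*(y 3) + (- 1 + (1/2)*(1/real n))*(x 7)*(y 1) + (- 1 + (1/2)*(1/real n))*(x 3)*(y 8) + (- 1 + (1/2)*(1/real n))*(x 1)*(y 7)) ((- 1 + (1/2)*(1/real n))*(x 8)*(y 4) + (- 1 + (1/2)*(1/real n))*(x 7)*(y 2) + (- 1 + (1/2)*(1/real n))*(x 4)*(y 8) + (- 1 + (1/2)*(1/real n))*(x 2)*(y 7)) ((-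 (1/2) + (1/16)*(1/real n)^5)*(x 8)*(y 0) + ((1/4) - (1/4)*(1/real n))*(x 6)*(y 2) + ((1/4) - (1/4)*(1/real n))*(x 5)*(y 1) + ((1/4) - (1/4)*(1/real n))*(x 2)*(y 6) + ((1/4) - (1/4)*(1/real n))*(x 1)*(y 5) + (- (1/2) + (1/16)*(1/real n)^5)*(x 0)*(y 8)) (((1/2) - (1/16)*(1/real n)^5)*(x 7)*(y 0) + ((1/4) - (1/4)*(1/real n))*(x 6)*(y 4) + ((1/4) - (1/4)*(1/real n))*(x 5)*(y 3) + ((1/4) - (1/4)*(1/real n))*(x 4)*(y 6) + ((1/4) - (1/4)*(1/real n))*(x 3)*(y 5) + ((1/2) - (1/16)*(1/real n)^5)*(x 0)*(y 7))) 0) Z =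
     gform (gseq n) (projm (brk Z (S x 0))) (S y 0) + gform (gseq n) (S x 0) (projm (brk Z (S y 0)))"
      unfolding Z brk_S projm_S gform_S v9_simps dd_def t_def[symmetric] unfolding m_def[symmetric] using tm
      by algebra
  qed
qed

definition pl :: "(9 \<Rightarrow> real) \<Rightarrow> (9 \<Rightarrow> real) \<Rightarrow> 9 \<Rightarrow> 9 \<Rightarrow> real" where
  "pl x y a b = x a * y b - x b * y a"

definition terms :: "real \<Rightarrow> real \<Rightarrow> (real \<times> 9 \<times> 9 \<times> 9 \<times> 9) list" where
  "terms t m = [(((1/64)*m^8), 0, 1, 0, 1),
    ((- (1/8)*m^3 + (5/16)*m^4 - (1/16)*m^5), 0, 1, 5, 8),
    (((1/64)*m^8), 0, 2, 0, 2),
    ((- (1/8)*m^3 + (5/16)*m^4 - (1/16)*m^5), 0, 2, 6, 8),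
    (((1/64)*m^8), 0, 3, 0, 3),
    (((1/8)*m^3 - (5/16)*m^4 + (1/16)*m^5), 0, 3, 5, 7),
    (((1/64)*m^8), 0, 4, 0, 4),
    (((1/8)*m^3 - (5/16)*m^4 + (1/16)*m^5), 0, 4, 6, 7),
    (((1/4)*m^3 - (1/16)*m^4 - (1/16)*m^5), 0, 5, 1, 8),
    ((- (1/4)*m^3 + (1/16)*m^4 + (1/16)*m^5), 0, 5, 3, 7),
    (((1/4)*m^3 - (1/16)*m^4 - (1/16)*m^5), 0, 6, 2, 8),
    ((- (1/4)*m^3 + (1/16)*m^4 + (1/16)*m^5), 0, 6, 4, 7),
    (((1/128)*m^9), 0, 7, 0, 7),
    (((1/128)*m^9), 0, 8, 0, 8),
    ((1), 1, 2, 1, 2),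
    ((2), 1, 2, 3, 4),
    (((1/2)*t + 2 - (1/2)*m), 1, 2, 5, 6),
    ((1 - (3/16)*m^4), 1, 3, 1, 3),
    ((2 - (3/8)*m^4), 1, 3, 2, 4),
    ((- 2*t + 5 - m - (3/8)*m^4), 1, 3, 7, 8),
    ((- (7/8)*t + (1/4) + (1/8)*m), 1, 5, 1, 5),
    ((- (7/4)*t + (1/2) + (1/4)*m), 1, 5, 2, 6),
    (((5/4)*t - (1/2) + (1/4)*m), 1, 7, 1, 7),
    (((5/2)*t - 1 + (1/2)*m), 1, 7, 3, 8),
    ((1 - (3/16)*m^4), 2, 4, 2, 4),
    ((- 2*t + 5 - m - (3/8)*m^4), 2, 4, 7, 8),
    ((- (7/8)*t + (1/4) + (1/8)*m), 2, 6, 2, 6),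
    (((5/4)*t - (1/2) + (1/4)*m), 2, 7, 2, 7),
    (((5/2)*t - 1 + (1/2)*m), 2, 7, 4, 8),
    ((1), 3, 4, 3, 4),
    (((1/2)*t + 2 - (1/2)*m), 3, 4, 5, 6),
    ((- (7/8)*t + (1/4) + (1/8)*m), 3, 5, 3, 5),
    ((- (7/4)*t + (1/2) + (1/4)*m), 3, 5, 4, 6),
    (((5/4)*t - (1/2) + (1/4)*m), 3, 8, 3, 8),
    ((- (7/8)*t + (1/4) + (1/8)*m), 4, 6, 4, 6),
    (((5/4)*t - (1/2) + (1/4)*m), 4, 8, 4, 8),
    ((t), 5, 6, 5, 6),
    (((1/4)*t^2 + (3/2)*t - (3/4)), 5, 7, 5, 7),
    (((1/4)*t^2 + (3/2)*t - (3/4)), 5, 8, 5, 8),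
    (((1/4)*t^2 + (3/2)*t - (3/4)), 6, 7, 6, 7),
    (((1/4)*t^2 + (3/2)*t - (3/4)), 6, 8, 6, 8),
    ((2*t - (3/16)*m^4), 7, 8, 7, 8)]"

definition PL :: "real \<Rightarrow> real \<Rightarrow> (9 \<Rightarrow> real) \<Rightarrow> (9 \<Rightarrow> real) \<Rightarrow> real" where
  "PL t m x y = sum_list (map (\<lambda>(c,a,b,c',d). c * pl x y a b * pl x y c' d) (terms t m))"

lemma curvnum_S: assumes n: "n \<ge> 1"
  shows "curvnum (gseq n) (S x 0) (S y 0) = PL (real n) (1 / real n) x y"
proof -
  define t where "t = real n"
  define m where "m = 1 / t"
  have tm: "t * m = 1" using n unfolding m_def t_def by simp
  show ?thesis
    unfolding curvnum_def Uop_S[OF n] brk_S projm_S gform_S v9_simps dd_def t_def[symmetric]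
    unfolding m_def[symmetric] PL_def terms_def pl_def list.map prod.case sum_list_simps
    using tm by algebra
qed

definition pairs :: "(9 \<times> 9) list" where "pairs = [(0,1), (0,2), (0,3), (0,4), (0,5), (0,6), (0,7), (0,8), (1,2), (1,3), (1,4), (1,5), (1,6), (1,7), (1,8), (2,3), (2,4), (2,5), (2,6), (2,7), (2,8), (3,4), (3,5), (3,6), (3,7), (3,8), (4,5), (4,6), (4,7), (4,8), (5,6), (5,7), (5,8), (6,7), (6,8), (7,8)]"

definition DEN :: "real \<Rightarrow> (9 \<Rightarrow> real) \<Rightarrow> (9 \<Rightarrow> real) \<Rightarrow> real" where
  "DEN t x y = sum_list (map (\<lambda>(a,b). dd t a * dd t b * (pl x y a b)^2) pairs)"

definition good :: "real \<Rightarrow> real \<times> 9 \<times> 9 \<times> 9 \<times> 9 \<Rightarrow> bool" where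
  "good t = (\<lambda>(c,a,b,c',d). c^2 \<le> 36 * (dd t a * dd t b * dd t c' * dd t d) \<and> (a,b) \<in> set pairs \<and> (c',d) \<in> set pairs)"

lemma lagrange: "gform (gseq n) (S x 0) (S x 0) * gform (gseq n) (S y 0) (S y 0) - (gform (gseq n) (S x 0) (S y 0))^2
   = DEN (real n) x y"
  unfolding gform_S DEN_def pairs_def pl_def list.map prod.case sum_list_simps by algebra


lemma coef_bound:
  fixes ch B C D k T :: real
  assumes "\<bar>ch\<bar> \<le> B" "B^2 \<le> 36 * k" "C = ch * T" "D = k * T^2"
  shows "C^2 \<le> 36 * D"
proof -
  have "ch^2 \<le> B^2" using power_mono[of "\<bar>ch\<bar>" B 2] assms(1) by simp
  then have "ch^2 * T^2 \<le> B^2 * T^2" by (rule mult_right_mono) simp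
  also have "\<dots> \<le> 36 * k * T^2" using assms(2) by (rule mult_right_mono) simp
  finally show ?thesis using assms(3,4) by (simp add: power_mult_distrib)
qed

lemma amgm:
  fixes c A B p q :: real
  assumes "c^2 \<le> 36 * (A * B)" "0 \<le> A" "0 \<le> B"
  shows "\<bar>c * p * q\<bar> \<le> 3 * (A * p^2 + B * q^2)"
proof -
  define u where "u = 3 * A * p^2"
  define v where "v = 3 * B * q^2"
  have u0: "0 \<le> u" unfolding u_def using assms(2) by simp
  have v0: "0 \<le> v" unfolding v_def using assms(3) by simp
  have "\<bar>c * p * q\<bar>^2 = c^2 * (p^2 * q^2)" unfolding power2_abs by algebra
  also have "\<dots> \<le> 36 * (A * B) * (p^2 * q^2)" by (rule mult_right_mono[OF assms(1)]) simp
  also have "\<dots> = 4 * u * v" unfolding u_def v_def by algebra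
  also have "\<dots> \<le> (u + v)^2"
  proof -
    have "(u + v)^2 - 4 * u * v = (u - v)^2" by algebra
    then show ?thesis using zero_le_power2[of "u-v"] by linarith
  qed
  finally have "\<bar>c * p * q\<bar>^2 \<le> (u + v)^2" .
  then have "\<bar>c * p * q\<bar> \<le> u + v" by (rule power2_le_imp_le) (insert u0 v0, linarith)
  moreover have "u + v = 3 * (A * p^2 + B * q^2)" unfolding u_def v_def by algebra
  ultimately show ?thesis by simp
qed

lemma dd_nonneg: "t > 0 \<Longrightarrow> 0 \<le> dd t k"
  using dd_pos[of t k] by simp

lemma elem_le_sum_list:
  fixes f :: "'a \<Rightarrow> real"
  shows "x \<in> set xs \<Longrightarrow> (\<forall>y\<in>set xs. 0 \<le> f y) \<Longrightarrow> f x \<le> sum_list (map f xs)"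
proof (induction xs)
  case Nil then show ?case by simp
next
  case (Cons a xs)
  have "0 \<le> sum_list (map f xs)" using Cons.prems(2) by (intro sum_list_nonneg) auto
  then show ?case using Cons by auto
qed

lemma sum_list_abs_bound:
  fixes f :: "'a \<Rightarrow> real"
  shows "(\<forall>y\<in>set xs. \<bar>f y\<bar> \<le> M) \<Longrightarrow> \<bar>sum_list (map f xs)\<bar> \<le> real (length xs) * M"
proof (induction xs)
  case Nil then show ?case by simp
next
  case (Cons a xs)
  then have "\<bar>f a\<bar> \<le> M" "\<bar>sum_list (map f xs)\<bar> \<le> real (length xs) * M" by auto
  then show ?case by (simp add: algebra_simps)
qed

lemma DEN_ge: assumes "(a,b) \<in> set pairs" "t > 0"
  shows "dd t a * dd t b * (pl x y a b)^2 \<le> DEN t x y"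
proof -
  have "(\<lambda>(a,b). dd t a * dd t b * (pl x y a b)^2) (a,b) \<le> DEN t x y"
    unfolding DEN_def
    by (rule elem_le_sum_list[OF assms(1)]) (use dd_nonneg[OF assms(2)] in \<open>auto intro!: mult_nonneg_nonneg\<close>)
  then show ?thesis by simp
qed

lemma DEN_nonneg: "t > 0 \<Longrightarrow> 0 \<le> DEN t x y"
  unfolding DEN_def by (intro sum_list_nonneg) (use dd_nonneg in \<open>auto intro!: mult_nonneg_nonneg\<close>)

lemma term_bound: assumes "good t z" "t > 0"
  shows "\<bar>(\<lambda>(c,a,b,c',d). c * pl x y a b * pl x y c' d) z\<bar> \<le> 6 * DEN t x y"
proof -
  obtain c a b c' d where z: "z = (c,a,b,c',d)" by (cases z) auto
  have g: "c^2 \<le> 36 * ((dd t a * dd t b) * (dd t c' * dd t d))" "(a,b) \<in> set pairs" "(c',d) \<in> set pairs"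
    using assms(1) unfolding z good_def by (auto simp: mult.assoc)
  have A: "0 \<le> dd t a * dd t b" "0 \<le> dd t c' * dd t d" using dd_nonneg[OF assms(2)] by (auto intro!: mult_nonneg_nonneg)
  have "\<bar>c * pl x y a b * pl x y c' d\<bar> \<le> 3 * (dd t a * dd t b * (pl x y a b)^2 + dd t c' * dd t d * (pl x y c' d)^2)"
    by (rule amgm[OF g(1) A])
  also have "\<dots> \<le> 3 * (DEN t x y + DEN t x y)"
    using DEN_ge[OF g(2) assms(2), of x y] DEN_ge[OF g(3) assms(2), of x y] by simp
  finally show ?thesis unfolding z by simp
qed


lemma cb_0: assumes t: "t \<ge> 1" shows "good t (((1/64)*(1/t)^8), 0, 1, 0, 1)"
proof -
  define m where "m = 1 / t"
  have tm: "t * m = 1" and m0: "0 < m" and m1: "m \<le> 1" using t by (auto simp: m_def)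
  have p1: "0 \<le> m ^ k" and p2: "m ^ k \<le> 1" for k using m0 m1 by (auto simp: power_le_one)
  have t0: "t \<noteq> 0" using t by simp
  have e1: "(((1/64)*m^8)::real) = ((1/64)*m^4) * m^4" unfolding m_def using t0 by (simp add: field_simps power_one_over eval_nat_numeral)
  have e2: "dd t 0 * dd t 1 * dd t 0 * dd t 1 = (1/16) * (m^4)^2"
    unfolding dd_def v9_simps m_def power_one_over using t0 by (simp add: field_simps eval_nat_numeral)
  have e3: "\<bar>(((1/64)*m^4)::real)\<bar> \<le> (1/64)" unfolding abs_le_iff using p1[of 4] p2[of 4] m0 m1 by linarith
  have "(((1/64)*m^8))^2 \<le> 36 * (dd t 0 * dd t 1 * dd t 0 * dd t 1)"
    by (rule coef_bound[OF e3 _ e1 e2]) (simp add: power2_eq_square)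
  then show ?thesis unfolding good_def prod.case m_def[symmetric] by (simp add: pairs_def)
qed

lemma cb_1: assumes t: "t \<ge> 1" shows "good t ((- (1/8)*(1/t)^3 + (5/16)*(1/t)^4 - (1/16)*(1/t)^5), 0, 1, 5, 8)"
proof -
  define m where "m = 1 / t"
  have tm: "t * m = 1" and m0: "0 < m" and m1: "m \<le> 1" using t by (auto simp: m_def)
  have p1: "0 \<le> m ^ k" and p2: "m ^ k \<le> 1" for k using m0 m1 by (auto simp: power_le_one)
  have t0: "t \<noteq> 0" using t by simp
  have e1: "((- (1/8)*m^3 + (5/16)*m^4 - (1/16)*m^5)::real) = (- (1/8)*m^2 + (5/16)*m^3 - (1/16)*m^4) * m" unfolding m_def using t0 by (simp add: field_simps power_one_over eval_nat_numeral)
  have e2: "dd t 0 * dd t 1 * dd t 5 * dd t 8 = (1/2) * (m)^2"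
    unfolding dd_def v9_simps m_def power_one_over using t0 by (simp add: field_simps eval_nat_numeral)
  have e3: "\<bar>((- (1/8)*m^2 + (5/16)*m^3 - (1/16)*m^4)::real)\<bar> \<le> (1/2)" unfolding abs_le_iff using p1[of 2] p2[of 2] p1[of 3] p2[of 3] p1[of 4] p2[of 4] m0 m1 by linarith
  have "((- (1/8)*m^3 + (5/16)*m^4 - (1/16)*m^5))^2 \<le> 36 * (dd t 0 * dd t 1 * dd t 5 * dd t 8)"
    by (rule coef_bound[OF e3 _ e1 e2]) (simp add: power2_eq_square)
  then show ?thesis unfolding good_def prod.case m_def[symmetric] by (simp add: pairs_def)
qed

lemma cb_2: assumes t: "t \<ge> 1" shows "good t (((1/64)*(1/t)^8), 0, 2, 0, 2)"
proof -
  define m where "m = 1 / t"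
  have tm: "t * m = 1" and m0: "0 < m" and m1: "m \<le> 1" using t by (auto simp: m_def)
  have p1: "0 \<le> m ^ k" and p2: "m ^ k \<le> 1" for k using m0 m1 by (auto simp: power_le_one)
  have t0: "t \<noteq> 0" using t by simp
  have e1: "(((1/64)*m^8)::real) = ((1/64)*m^4) * m^4" unfolding m_def using t0 by (simp add: field_simps power_one_over eval_nat_numeral)
  have e2: "dd t 0 * dd t 2 * dd t 0 * dd t 2 = (1/16) * (m^4)^2"
    unfolding dd_def v9_simps m_def power_one_over using t0 by (simp add: field_simps eval_nat_numeral)
  have e3: "\<bar>(((1/64)*m^4)::real)\<bar> \<le> (1/64)" unfolding abs_le_iff using p1[of 4] p2[of 4] m0 m1 by linarith
  have "(((1/64)*m^8))^2 \<le> 36 * (dd t 0 * dd t 2 * dd t 0 * dd t 2)"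
    by (rule coef_bound[OF e3 _ e1 e2]) (simp add: power2_eq_square)
  then show ?thesis unfolding good_def prod.case m_def[symmetric] by (simp add: pairs_def)
qed

lemma cb_3: assumes t: "t \<ge> 1" shows "good t ((- (1/8)*(1/t)^3 + (5/16)*(1/t)^4 - (1/16)*(1/t)^5), 0, 2, 6, 8)"
proof -
  define m where "m = 1 / t"
  have tm: "t * m = 1" and m0: "0 < m" and m1: "m \<le> 1" using t by (auto simp: m_def)
  have p1: "0 \<le> m ^ k" and p2: "m ^ k \<le> 1" for k using m0 m1 by (auto simp: power_le_one)
  have t0: "t \<noteq> 0" using t by simp
  have e1: "((- (1/8)*m^3 + (5/16)*m^4 - (1/16)*m^5)::real) = (- (1/8)*m^2 + (5/16)*m^3 - (1/16)*m^4) * m" unfolding m_def using t0 by (simp add: field_simps power_one_over eval_nat_numeral)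
  have e2: "dd t 0 * dd t 2 * dd t 6 * dd t 8 = (1/2) * (m)^2"
    unfolding dd_def v9_simps m_def power_one_over using t0 by (simp add: field_simps eval_nat_numeral)
  have e3: "\<bar>((- (1/8)*m^2 + (5/16)*m^3 - (1/16)*m^4)::real)\<bar> \<le> (1/2)" unfolding abs_le_iff using p1[of 2] p2[of 2] p1[of 3] p2[of 3] p1[of 4] p2[of 4] m0 m1 by linarith
  have "((- (1/8)*m^3 + (5/16)*m^4 - (1/16)*m^5))^2 \<le> 36 * (dd t 0 * dd t 2 * dd t 6 * dd t 8)"
    by (rule coef_bound[OF e3 _ e1 e2]) (simp add: power2_eq_square)
  then show ?thesis unfolding good_def prod.case m_def[symmetric] by (simp add: pairs_def)
qed

lemma cb_4: assumes t: "t \<ge> 1" shows "good t (((1/64)*(1/t)^8), 0, 3, 0, 3)"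
proof -
  define m where "m = 1 / t"
  have tm: "t * m = 1" and m0: "0 < m" and m1: "m \<le> 1" using t by (auto simp: m_def)
  have p1: "0 \<le> m ^ k" and p2: "m ^ k \<le> 1" for k using m0 m1 by (auto simp: power_le_one)
  have t0: "t \<noteq> 0" using t by simp
  have e1: "(((1/64)*m^8)::real) = ((1/64)*m^4) * m^4" unfolding m_def using t0 by (simp add: field_simps power_one_over eval_nat_numeral)
  have e2: "dd t 0 * dd t 3 * dd t 0 * dd t 3 = (1/16) * (m^4)^2"
    unfolding dd_def v9_simps m_def power_one_over using t0 by (simp add: field_simps eval_nat_numeral)
  have e3: "\<bar>(((1/64)*m^4)::real)\<bar> \<le> (1/64)" unfolding abs_le_iff using p1[of 4] p2[of 4] m0 m1 by linarith
  have "(((1/64)*m^8))^2 \<le> 36 * (dd t 0 * dd t 3 * dd t 0 * dd t 3)"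
    by (rule coef_bound[OF e3 _ e1 e2]) (simp add: power2_eq_square)
  then show ?thesis unfolding good_def prod.case m_def[symmetric] by (simp add: pairs_def)
qed

lemma cb_5: assumes t: "t \<ge> 1" shows "good t (((1/8)*(1/t)^3 - (5/16)*(1/t)^4 + (1/16)*(1/t)^5), 0, 3, 5, 7)"
proof -
  define m where "m = 1 / t"
  have tm: "t * m = 1" and m0: "0 < m" and m1: "m \<le> 1" using t by (auto simp: m_def)
  have p1: "0 \<le> m ^ k" and p2: "m ^ k \<le> 1" for k using m0 m1 by (auto simp: power_le_one)
  have t0: "t \<noteq> 0" using t by simp
  have e1: "(((1/8)*m^3 - (5/16)*m^4 + (1/16)*m^5)::real) = ((1/8)*m^2 - (5/16)*m^3 + (1/16)*m^4) * m" unfolding m_def using t0 by (simp add: field_simps power_one_over eval_nat_numeral)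
  have e2: "dd t 0 * dd t 3 * dd t 5 * dd t 7 = (1/2) * (m)^2"
    unfolding dd_def v9_simps m_def power_one_over using t0 by (simp add: field_simps eval_nat_numeral)
  have e3: "\<bar>(((1/8)*m^2 - (5/16)*m^3 + (1/16)*m^4)::real)\<bar> \<le> (1/2)" unfolding abs_le_iff using p1[of 2] p2[of 2] p1[of 3] p2[of 3] p1[of 4] p2[of 4] m0 m1 by linarith
  have "(((1/8)*m^3 - (5/16)*m^4 + (1/16)*m^5))^2 \<le> 36 * (dd t 0 * dd t 3 * dd t 5 * dd t 7)"
    by (rule coef_bound[OF e3 _ e1 e2]) (simp add: power2_eq_square)
  then show ?thesis unfolding good_def prod.case m_def[symmetric] by (simp add: pairs_def)
qed

lemma cb_6: assumes t: "t \<ge> 1" shows "good t (((1/64)*(1/t)^8), 0, 4, 0, 4)"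
proof -
  define m where "m = 1 / t"
  have tm: "t * m = 1" and m0: "0 < m" and m1: "m \<le> 1" using t by (auto simp: m_def)
  have p1: "0 \<le> m ^ k" and p2: "m ^ k \<le> 1" for k using m0 m1 by (auto simp: power_le_one)
  have t0: "t \<noteq> 0" using t by simp
  have e1: "(((1/64)*m^8)::real) = ((1/64)*m^4) * m^4" unfolding m_def using t0 by (simp add: field_simps power_one_over eval_nat_numeral)
  have e2: "dd t 0 * dd t 4 * dd t 0 * dd t 4 = (1/16) * (m^4)^2"
    unfolding dd_def v9_simps m_def power_one_over using t0 by (simp add: field_simps eval_nat_numeral)
  have e3: "\<bar>(((1/64)*m^4)::real)\<bar> \<le> (1/64)" unfolding abs_le_iff using p1[of 4] p2[of 4] m0 m1 by linarith
  have "(((1/64)*m^8))^2 \<le> 36 * (dd t 0 * dd t 4 * dd t 0 * dd t 4)"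
    by (rule coef_bound[OF e3 _ e1 e2]) (simp add: power2_eq_square)
  then show ?thesis unfolding good_def prod.case m_def[symmetric] by (simp add: pairs_def)
qed

lemma cb_7: assumes t: "t \<ge> 1" shows "good t (((1/8)*(1/t)^3 - (5/16)*(1/t)^4 + (1/16)*(1/t)^5), 0, 4, 6, 7)"
proof -
  define m where "m = 1 / t"
  have tm: "t * m = 1" and m0: "0 < m" and m1: "m \<le> 1" using t by (auto simp: m_def)
  have p1: "0 \<le> m ^ k" and p2: "m ^ k \<le> 1" for k using m0 m1 by (auto simp: power_le_one)
  have t0: "t \<noteq> 0" using t by simp
  have e1: "(((1/8)*m^3 - (5/16)*m^4 + (1/16)*m^5)::real) = ((1/8)*m^2 - (5/16)*m^3 + (1/16)*m^4) * m" unfolding m_def using t0 by (simp add: field_simps power_one_over eval_nat_numeral)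
  have e2: "dd t 0 * dd t 4 * dd t 6 * dd t 7 = (1/2) * (m)^2"
    unfolding dd_def v9_simps m_def power_one_over using t0 by (simp add: field_simps eval_nat_numeral)
  have e3: "\<bar>(((1/8)*m^2 - (5/16)*m^3 + (1/16)*m^4)::real)\<bar> \<le> (1/2)" unfolding abs_le_iff using p1[of 2] p2[of 2] p1[of 3] p2[of 3] p1[of 4] p2[of 4] m0 m1 by linarith
  have "(((1/8)*m^3 - (5/16)*m^4 + (1/16)*m^5))^2 \<le> 36 * (dd t 0 * dd t 4 * dd t 6 * dd t 7)"
    by (rule coef_bound[OF e3 _ e1 e2]) (simp add: power2_eq_square)
  then show ?thesis unfolding good_def prod.case m_def[symmetric] by (simp add: pairs_def)
qed

lemma cb_8: assumes t: "t \<ge> 1" shows "good t (((1/4)*(1/t)^3 - (1/16)*(1/t)^4 - (1/16)*(1/t)^5), 0, 5, 1, 8)"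
proof -
  define m where "m = 1 / t"
  have tm: "t * m = 1" and m0: "0 < m" and m1: "m \<le> 1" using t by (auto simp: m_def)
  have p1: "0 \<le> m ^ k" and p2: "m ^ k \<le> 1" for k using m0 m1 by (auto simp: power_le_one)
  have t0: "t \<noteq> 0" using t by simp
  have e1: "(((1/4)*m^3 - (1/16)*m^4 - (1/16)*m^5)::real) = ((1/4)*m^2 - (1/16)*m^3 - (1/16)*m^4) * m" unfolding m_def using t0 by (simp add: field_simps power_one_over eval_nat_numeral)
  have e2: "dd t 0 * dd t 5 * dd t 1 * dd t 8 = (1/2) * (m)^2"
    unfolding dd_def v9_simps m_def power_one_over using t0 by (simp add: field_simps eval_nat_numeral)
  have e3: "\<bar>(((1/4)*m^2 - (1/16)*m^3 - (1/16)*m^4)::real)\<bar> \<le> (3/8)" unfolding abs_le_iff using p1[of 2] p2[of 2] p1[of 3] p2[of 3] p1[of 4] p2[of 4] m0 m1 by linarith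
  have "(((1/4)*m^3 - (1/16)*m^4 - (1/16)*m^5))^2 \<le> 36 * (dd t 0 * dd t 5 * dd t 1 * dd t 8)"
    by (rule coef_bound[OF e3 _ e1 e2]) (simp add: power2_eq_square)
  then show ?thesis unfolding good_def prod.case m_def[symmetric] by (simp add: pairs_def)
qed

lemma cb_9: assumes t: "t \<ge> 1" shows "good t ((- (1/4)*(1/t)^3 + (1/16)*(1/t)^4 + (1/16)*(1/t)^5), 0, 5, 3, 7)"
proof -
  define m where "m = 1 / t"
  have tm: "t * m = 1" and m0: "0 < m" and m1: "m \<le> 1" using t by (auto simp: m_def)
  have p1: "0 \<le> m ^ k" and p2: "m ^ k \<le> 1" for k using m0 m1 by (auto simp: power_le_one)
  have t0: "t \<noteq> 0" using t by simp
  have e1: "((- (1/4)*m^3 + (1/16)*m^4 + (1/16)*m^5)::real) = (- (1/4)*m^2 + (1/16)*m^3 + (1/16)*m^4) * m" unfolding m_def using t0 by (simp add: field_simps power_one_over eval_nat_numeral)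
  have e2: "dd t 0 * dd t 5 * dd t 3 * dd t 7 = (1/2) * (m)^2"
    unfolding dd_def v9_simps m_def power_one_over using t0 by (simp add: field_simps eval_nat_numeral)
  have e3: "\<bar>((- (1/4)*m^2 + (1/16)*m^3 + (1/16)*m^4)::real)\<bar> \<le> (3/8)" unfolding abs_le_iff using p1[of 2] p2[of 2] p1[of 3] p2[of 3] p1[of 4] p2[of 4] m0 m1 by linarith
  have "((- (1/4)*m^3 + (1/16)*m^4 + (1/16)*m^5))^2 \<le> 36 * (dd t 0 * dd t 5 * dd t 3 * dd t 7)"
    by (rule coef_bound[OF e3 _ e1 e2]) (simp add: power2_eq_square)
  then show ?thesis unfolding good_def prod.case m_def[symmetric] by (simp add: pairs_def)
qed

lemma cb_10: assumes t: "t \<ge> 1" shows "good t (((1/4)*(1/t)^3 - (1/16)*(1/t)^4 - (1/16)*(1/t)^5), 0, 6, 2, 8)"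
proof -
  define m where "m = 1 / t"
  have tm: "t * m = 1" and m0: "0 < m" and m1: "m \<le> 1" using t by (auto simp: m_def)
  have p1: "0 \<le> m ^ k" and p2: "m ^ k \<le> 1" for k using m0 m1 by (auto simp: power_le_one)
  have t0: "t \<noteq> 0" using t by simp
  have e1: "(((1/4)*m^3 - (1/16)*m^4 - (1/16)*m^5)::real) = ((1/4)*m^2 - (1/16)*m^3 - (1/16)*m^4) * m" unfolding m_def using t0 by (simp add: field_simps power_one_over eval_nat_numeral)
  have e2: "dd t 0 * dd t 6 * dd t 2 * dd t 8 = (1/2) * (m)^2"
    unfolding dd_def v9_simps m_def power_one_over using t0 by (simp add: field_simps eval_nat_numeral)
  have e3: "\<bar>(((1/4)*m^2 - (1/16)*m^3 - (1/16)*m^4)::real)\<bar> \<le> (3/8)" unfolding abs_le_iff using p1[of 2] p2[of 2] p1[of 3] p2[of 3] p1[of 4] p2[of 4] m0 m1 by linarith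
  have "(((1/4)*m^3 - (1/16)*m^4 - (1/16)*m^5))^2 \<le> 36 * (dd t 0 * dd t 6 * dd t 2 * dd t 8)"
    by (rule coef_bound[OF e3 _ e1 e2]) (simp add: power2_eq_square)
  then show ?thesis unfolding good_def prod.case m_def[symmetric] by (simp add: pairs_def)
qed

lemma cb_11: assumes t: "t \<ge> 1" shows "good t ((- (1/4)*(1/t)^3 + (1/16)*(1/t)^4 + (1/16)*(1/t)^5), 0, 6, 4, 7)"
proof -
  define m where "m = 1 / t"
  have tm: "t * m = 1" and m0: "0 < m" and m1: "m \<le> 1" using t by (auto simp: m_def)
  have p1: "0 \<le> m ^ k" and p2: "m ^ k \<le> 1" for k using m0 m1 by (auto simp: power_le_one)
  have t0: "t \<noteq> 0" using t by simp
  have e1: "((- (1/4)*m^3 + (1/16)*m^4 + (1/16)*m^5)::real) = (- (1/4)*m^2 + (1/16)*m^3 + (1/16)*m^4) * m" unfolding m_def using t0 by (simp add: field_simps power_one_over eval_nat_numeral)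
  have e2: "dd t 0 * dd t 6 * dd t 4 * dd t 7 = (1/2) * (m)^2"
    unfolding dd_def v9_simps m_def power_one_over using t0 by (simp add: field_simps eval_nat_numeral)
  have e3: "\<bar>((- (1/4)*m^2 + (1/16)*m^3 + (1/16)*m^4)::real)\<bar> \<le> (3/8)" unfolding abs_le_iff using p1[of 2] p2[of 2] p1[of 3] p2[of 3] p1[of 4] p2[of 4] m0 m1 by linarith
  have "((- (1/4)*m^3 + (1/16)*m^4 + (1/16)*m^5))^2 \<le> 36 * (dd t 0 * dd t 6 * dd t 4 * dd t 7)"
    by (rule coef_bound[OF e3 _ e1 e2]) (simp add: power2_eq_square)
  then show ?thesis unfolding good_def prod.case m_def[symmetric] by (simp add: pairs_def)
qed

lemma cb_12: assumes t: "t \<ge> 1" shows "good t (((1/128)*(1/t)^9), 0, 7, 0, 7)"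
proof -
  define m where "m = 1 / t"
  have tm: "t * m = 1" and m0: "0 < m" and m1: "m \<le> 1" using t by (auto simp: m_def)
  have p1: "0 \<le> m ^ k" and p2: "m ^ k \<le> 1" for k using m0 m1 by (auto simp: power_le_one)
  have t0: "t \<noteq> 0" using t by simp
  have e1: "(((1/128)*m^9)::real) = ((1/128)*m^6) * m^3" unfolding m_def using t0 by (simp add: field_simps power_one_over eval_nat_numeral)
  have e2: "dd t 0 * dd t 7 * dd t 0 * dd t 7 = (1/4) * (m^3)^2"
    unfolding dd_def v9_simps m_def power_one_over using t0 by (simp add: field_simps eval_nat_numeral)
  have e3: "\<bar>(((1/128)*m^6)::real)\<bar> \<le> (1/128)" unfolding abs_le_iff using p1[of 6] p2[of 6] m0 m1 by linarith
  have "(((1/128)*m^9))^2 \<le> 36 * (dd t 0 * dd t 7 * dd t 0 * dd t 7)"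
    by (rule coef_bound[OF e3 _ e1 e2]) (simp add: power2_eq_square)
  then show ?thesis unfolding good_def prod.case m_def[symmetric] by (simp add: pairs_def)
qed

lemma cb_13: assumes t: "t \<ge> 1" shows "good t (((1/128)*(1/t)^9), 0, 8, 0, 8)"
proof -
  define m where "m = 1 / t"
  have tm: "t * m = 1" and m0: "0 < m" and m1: "m \<le> 1" using t by (auto simp: m_def)
  have p1: "0 \<le> m ^ k" and p2: "m ^ k \<le> 1" for k using m0 m1 by (auto simp: power_le_one)
  have t0: "t \<noteq> 0" using t by simp
  have e1: "(((1/128)*m^9)::real) = ((1/128)*m^6) * m^3" unfolding m_def using t0 by (simp add: field_simps power_one_over eval_nat_numeral)
  have e2: "dd t 0 * dd t 8 * dd t 0 * dd t 8 = (1/4) * (m^3)^2"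
    unfolding dd_def v9_simps m_def power_one_over using t0 by (simp add: field_simps eval_nat_numeral)
  have e3: "\<bar>(((1/128)*m^6)::real)\<bar> \<le> (1/128)" unfolding abs_le_iff using p1[of 6] p2[of 6] m0 m1 by linarith
  have "(((1/128)*m^9))^2 \<le> 36 * (dd t 0 * dd t 8 * dd t 0 * dd t 8)"
    by (rule coef_bound[OF e3 _ e1 e2]) (simp add: power2_eq_square)
  then show ?thesis unfolding good_def prod.case m_def[symmetric] by (simp add: pairs_def)
qed

lemma cb_14: assumes t: "t \<ge> 1" shows "good t ((1), 1, 2, 1, 2)"
proof -
  define m where "m = 1 / t"
  have tm: "t * m = 1" and m0: "0 < m" and m1: "m \<le> 1" using t by (auto simp: m_def)
  have p1: "0 \<le> m ^ k" and p2: "m ^ k \<le> 1" for k using m0 m1 by (auto simp: power_le_one)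
  have t0: "t \<noteq> 0" using t by simp
  have e1: "((1)::real) = (1) * 1" unfolding m_def using t0 by (simp add: field_simps power_one_over eval_nat_numeral)
  have e2: "dd t 1 * dd t 2 * dd t 1 * dd t 2 = 1 * (1)^2"
    unfolding dd_def v9_simps m_def power_one_over using t0 by (simp add: field_simps eval_nat_numeral)
  have e3: "\<bar>((1)::real)\<bar> \<le> 1" unfolding abs_le_iff using  m0 m1 by linarith
  have "((1))^2 \<le> 36 * (dd t 1 * dd t 2 * dd t 1 * dd t 2)"
    by (rule coef_bound[OF e3 _ e1 e2]) (simp add: power2_eq_square)
  then show ?thesis unfolding good_def prod.case m_def[symmetric] by (simp add: pairs_def)
qed

lemma cb_15: assumes t: "t \<ge> 1" shows "good t ((2), 1, 2, 3, 4)"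
proof -
  define m where "m = 1 / t"
  have tm: "t * m = 1" and m0: "0 < m" and m1: "m \<le> 1" using t by (auto simp: m_def)
  have p1: "0 \<le> m ^ k" and p2: "m ^ k \<le> 1" for k using m0 m1 by (auto simp: power_le_one)
  have t0: "t \<noteq> 0" using t by simp
  have e1: "((2)::real) = (2) * 1" unfolding m_def using t0 by (simp add: field_simps power_one_over eval_nat_numeral)
  have e2: "dd t 1 * dd t 2 * dd t 3 * dd t 4 = 1 * (1)^2"
    unfolding dd_def v9_simps m_def power_one_over using t0 by (simp add: field_simps eval_nat_numeral)
  have e3: "\<bar>((2)::real)\<bar> \<le> 2" unfolding abs_le_iff using  m0 m1 by linarith
  have "((2))^2 \<le> 36 * (dd t 1 * dd t 2 * dd t 3 * dd t 4)"
    by (rule coef_bound[OF e3 _ e1 e2]) (simp add: power2_eq_square)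
  then show ?thesis unfolding good_def prod.case m_def[symmetric] by (simp add: pairs_def)
qed

lemma cb_16: assumes t: "t \<ge> 1" shows "good t (((1/2)*t + 2 - (1/2)*(1/t)), 1, 2, 5, 6)"
proof -
  define m where "m = 1 / t"
  have tm: "t * m = 1" and m0: "0 < m" and m1: "m \<le> 1" using t by (auto simp: m_def)
  have p1: "0 \<le> m ^ k" and p2: "m ^ k \<le> 1" for k using m0 m1 by (auto simp: power_le_one)
  have t0: "t \<noteq> 0" using t by simp
  have e1: "(((1/2)*t + 2 - (1/2)*m)::real) = ((1/2) + 2*m - (1/2)*m^2) * t" unfolding m_def using t0 by (simp add: field_simps power_one_over eval_nat_numeral)
  have e2: "dd t 1 * dd t 2 * dd t 5 * dd t 6 = 1 * (t)^2"
    unfolding dd_def v9_simps m_def power_one_over using t0 by (simp add: field_simps eval_nat_numeral)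
  have e3: "\<bar>(((1/2) + 2*m - (1/2)*m^2)::real)\<bar> \<le> 3" unfolding abs_le_iff using p1[of 1] p2[of 1] p1[of 2] p2[of 2] m0 m1 by linarith
  have "(((1/2)*t + 2 - (1/2)*m))^2 \<le> 36 * (dd t 1 * dd t 2 * dd t 5 * dd t 6)"
    by (rule coef_bound[OF e3 _ e1 e2]) (simp add: power2_eq_square)
  then show ?thesis unfolding good_def prod.case m_def[symmetric] by (simp add: pairs_def)
qed

lemma cb_17: assumes t: "t \<ge> 1" shows "good t ((1 - (3/16)*(1/t)^4), 1, 3, 1, 3)"
proof -
  define m where "m = 1 / t"
  have tm: "t * m = 1" and m0: "0 < m" and m1: "m \<le> 1" using t by (auto simp: m_def)
  have p1: "0 \<le> m ^ k" and p2: "m ^ k \<le> 1" for k using m0 m1 by (auto simp: power_le_one)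
  have t0: "t \<noteq> 0" using t by simp
  have e1: "((1 - (3/16)*m^4)::real) = (1 - (3/16)*m^4) * 1" unfolding m_def using t0 by (simp add: field_simps power_one_over eval_nat_numeral)
  have e2: "dd t 1 * dd t 3 * dd t 1 * dd t 3 = 1 * (1)^2"
    unfolding dd_def v9_simps m_def power_one_over using t0 by (simp add: field_simps eval_nat_numeral)
  have e3: "\<bar>((1 - (3/16)*m^4)::real)\<bar> \<le> (19/16)" unfolding abs_le_iff using p1[of 4] p2[of 4] m0 m1 by linarith
  have "((1 - (3/16)*m^4))^2 \<le> 36 * (dd t 1 * dd t 3 * dd t 1 * dd t 3)"
    by (rule coef_bound[OF e3 _ e1 e2]) (simp add: power2_eq_square)
  then show ?thesis unfolding good_def prod.case m_def[symmetric] by (simp add: pairs_def)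
qed

lemma cb_18: assumes t: "t \<ge> 1" shows "good t ((2 - (3/8)*(1/t)^4), 1, 3, 2, 4)"
proof -
  define m where "m = 1 / t"
  have tm: "t * m = 1" and m0: "0 < m" and m1: "m \<le> 1" using t by (auto simp: m_def)
  have p1: "0 \<le> m ^ k" and p2: "m ^ k \<le> 1" for k using m0 m1 by (auto simp: power_le_one)
  have t0: "t \<noteq> 0" using t by simp
  have e1: "((2 - (3/8)*m^4)::real) = (2 - (3/8)*m^4) * 1" unfolding m_def using t0 by (simp add: field_simps power_one_over eval_nat_numeral)
  have e2: "dd t 1 * dd t 3 * dd t 2 * dd t 4 = 1 * (1)^2"
    unfolding dd_def v9_simps m_def power_one_over using t0 by (simp add: field_simps eval_nat_numeral)
  have e3: "\<bar>((2 - (3/8)*m^4)::real)\<bar> \<le> (19/8)" unfolding abs_le_iff using p1[of 4] p2[of 4] m0 m1 by linarith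
  have "((2 - (3/8)*m^4))^2 \<le> 36 * (dd t 1 * dd t 3 * dd t 2 * dd t 4)"
    by (rule coef_bound[OF e3 _ e1 e2]) (simp add: power2_eq_square)
  then show ?thesis unfolding good_def prod.case m_def[symmetric] by (simp add: pairs_def)
qed

lemma cb_19: assumes t: "t \<ge> 1" shows "good t ((- 2*t + 5 - (1/t) - (3/8)*(1/t)^4), 1, 3, 7, 8)"
proof -
  define m where "m = 1 / t"
  have tm: "t * m = 1" and m0: "0 < m" and m1: "m \<le> 1" using t by (auto simp: m_def)
  have p1: "0 \<le> m ^ k" and p2: "m ^ k \<le> 1" for k using m0 m1 by (auto simp: power_le_one)
  have t0: "t \<noteq> 0" using t by simp
  have e1: "((- 2*t + 5 - m - (3/8)*m^4)::real) = (- 2 + 5*m - m^2 - (3/8)*m^5) * t" unfolding m_def using t0 by (simp add: field_simps power_one_over eval_nat_numeral)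
  have e2: "dd t 1 * dd t 3 * dd t 7 * dd t 8 = 4 * (t)^2"
    unfolding dd_def v9_simps m_def power_one_over using t0 by (simp add: field_simps eval_nat_numeral)
  have e3: "\<bar>((- 2 + 5*m - m^2 - (3/8)*m^5)::real)\<bar> \<le> (67/8)" unfolding abs_le_iff using p1[of 1] p2[of 1] p1[of 2] p2[of 2] p1[of 5] p2[of 5] m0 m1 by linarith
  have "((- 2*t + 5 - m - (3/8)*m^4))^2 \<le> 36 * (dd t 1 * dd t 3 * dd t 7 * dd t 8)"
    by (rule coef_bound[OF e3 _ e1 e2]) (simp add: power2_eq_square)
  then show ?thesis unfolding good_def prod.case m_def[symmetric] by (simp add: pairs_def)
qed

lemma cb_20: assumes t: "t \<ge> 1" shows "good t ((- (7/8)*t + (1/4) + (1/8)*(1/t)), 1, 5, 1, 5)"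
proof -
  define m where "m = 1 / t"
  have tm: "t * m = 1" and m0: "0 < m" and m1: "m \<le> 1" using t by (auto simp: m_def)
  have p1: "0 \<le> m ^ k" and p2: "m ^ k \<le> 1" for k using m0 m1 by (auto simp: power_le_one)
  have t0: "t \<noteq> 0" using t by simp
  have e1: "((- (7/8)*t + (1/4) + (1/8)*m)::real) = (- (7/8) + (1/4)*m + (1/8)*m^2) * t" unfolding m_def using t0 by (simp add: field_simps power_one_over eval_nat_numeral)
  have e2: "dd t 1 * dd t 5 * dd t 1 * dd t 5 = 1 * (t)^2"
    unfolding dd_def v9_simps m_def power_one_over using t0 by (simp add: field_simps eval_nat_numeral)
  have e3: "\<bar>((- (7/8) + (1/4)*m + (1/8)*m^2)::real)\<bar> \<le> (5/4)" unfolding abs_le_iff using p1[of 1] p2[of 1] p1[of 2] p2[of 2] m0 m1 by linarith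
  have "((- (7/8)*t + (1/4) + (1/8)*m))^2 \<le> 36 * (dd t 1 * dd t 5 * dd t 1 * dd t 5)"
    by (rule coef_bound[OF e3 _ e1 e2]) (simp add: power2_eq_square)
  then show ?thesis unfolding good_def prod.case m_def[symmetric] by (simp add: pairs_def)
qed

lemma cb_21: assumes t: "t \<ge> 1" shows "good t ((- (7/4)*t + (1/2) + (1/4)*(1/t)), 1, 5, 2, 6)"
proof -
  define m where "m = 1 / t"
  have tm: "t * m = 1" and m0: "0 < m" and m1: "m \<le> 1" using t by (auto simp: m_def)
  have p1: "0 \<le> m ^ k" and p2: "m ^ k \<le> 1" for k using m0 m1 by (auto simp: power_le_one)
  have t0: "t \<noteq> 0" using t by simp
  have e1: "((- (7/4)*t + (1/2) + (1/4)*m)::real) = (- (7/4) + (1/2)*m + (1/4)*m^2) * t" unfolding m_def using t0 by (simp add: field_simps power_one_over eval_nat_numeral)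
  have e2: "dd t 1 * dd t 5 * dd t 2 * dd t 6 = 1 * (t)^2"
    unfolding dd_def v9_simps m_def power_one_over using t0 by (simp add: field_simps eval_nat_numeral)
  have e3: "\<bar>((- (7/4) + (1/2)*m + (1/4)*m^2)::real)\<bar> \<le> (5/2)" unfolding abs_le_iff using p1[of 1] p2[of 1] p1[of 2] p2[of 2] m0 m1 by linarith
  have "((- (7/4)*t + (1/2) + (1/4)*m))^2 \<le> 36 * (dd t 1 * dd t 5 * dd t 2 * dd t 6)"
    by (rule coef_bound[OF e3 _ e1 e2]) (simp add: power2_eq_square)
  then show ?thesis unfolding good_def prod.case m_def[symmetric] by (simp add: pairs_def)
qed

lemma cb_22: assumes t: "t \<ge> 1" shows "good t (((5/4)*t - (1/2) + (1/4)*(1/t)), 1, 7, 1, 7)"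
proof -
  define m where "m = 1 / t"
  have tm: "t * m = 1" and m0: "0 < m" and m1: "m \<le> 1" using t by (auto simp: m_def)
  have p1: "0 \<le> m ^ k" and p2: "m ^ k \<le> 1" for k using m0 m1 by (auto simp: power_le_one)
  have t0: "t \<noteq> 0" using t by simp
  have e1: "(((5/4)*t - (1/2) + (1/4)*m)::real) = ((5/4) - (1/2)*m + (1/4)*m^2) * t" unfolding m_def using t0 by (simp add: field_simps power_one_over eval_nat_numeral)
  have e2: "dd t 1 * dd t 7 * dd t 1 * dd t 7 = 4 * (t)^2"
    unfolding dd_def v9_simps m_def power_one_over using t0 by (simp add: field_simps eval_nat_numeral)
  have e3: "\<bar>(((5/4) - (1/2)*m + (1/4)*m^2)::real)\<bar> \<le> 2" unfolding abs_le_iff using p1[of 1] p2[of 1] p1[of 2] p2[of 2] m0 m1 by linarith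
  have "(((5/4)*t - (1/2) + (1/4)*m))^2 \<le> 36 * (dd t 1 * dd t 7 * dd t 1 * dd t 7)"
    by (rule coef_bound[OF e3 _ e1 e2]) (simp add: power2_eq_square)
  then show ?thesis unfolding good_def prod.case m_def[symmetric] by (simp add: pairs_def)
qed

lemma cb_23: assumes t: "t \<ge> 1" shows "good t (((5/2)*t - 1 + (1/2)*(1/t)), 1, 7, 3, 8)"
proof -
  define m where "m = 1 / t"
  have tm: "t * m = 1" and m0: "0 < m" and m1: "m \<le> 1" using t by (auto simp: m_def)
  have p1: "0 \<le> m ^ k" and p2: "m ^ k \<le> 1" for k using m0 m1 by (auto simp: power_le_one)
  have t0: "t \<noteq> 0" using t by simp
  have e1: "(((5/2)*t - 1 + (1/2)*m)::real) = ((5/2) - m + (1/2)*m^2) * t" unfolding m_def using t0 by (simp add: field_simps power_one_over eval_nat_numeral)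
  have e2: "dd t 1 * dd t 7 * dd t 3 * dd t 8 = 4 * (t)^2"
    unfolding dd_def v9_simps m_def power_one_over using t0 by (simp add: field_simps eval_nat_numeral)
  have e3: "\<bar>(((5/2) - m + (1/2)*m^2)::real)\<bar> \<le> 4" unfolding abs_le_iff using p1[of 1] p2[of 1] p1[of 2] p2[of 2] m0 m1 by linarith
  have "(((5/2)*t - 1 + (1/2)*m))^2 \<le> 36 * (dd t 1 * dd t 7 * dd t 3 * dd t 8)"
    by (rule coef_bound[OF e3 _ e1 e2]) (simp add: power2_eq_square)
  then show ?thesis unfolding good_def prod.case m_def[symmetric] by (simp add: pairs_def)
qed

lemma cb_24: assumes t: "t \<ge> 1" shows "good t ((1 - (3/16)*(1/t)^4), 2, 4, 2, 4)"
proof -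
  define m where "m = 1 / t"
  have tm: "t * m = 1" and m0: "0 < m" and m1: "m \<le> 1" using t by (auto simp: m_def)
  have p1: "0 \<le> m ^ k" and p2: "m ^ k \<le> 1" for k using m0 m1 by (auto simp: power_le_one)
  have t0: "t \<noteq> 0" using t by simp
  have e1: "((1 - (3/16)*m^4)::real) = (1 - (3/16)*m^4) * 1" unfolding m_def using t0 by (simp add: field_simps power_one_over eval_nat_numeral)
  have e2: "dd t 2 * dd t 4 * dd t 2 * dd t 4 = 1 * (1)^2"
    unfolding dd_def v9_simps m_def power_one_over using t0 by (simp add: field_simps eval_nat_numeral)
  have e3: "\<bar>((1 - (3/16)*m^4)::real)\<bar> \<le> (19/16)" unfolding abs_le_iff using p1[of 4] p2[of 4] m0 m1 by linarith
  have "((1 - (3/16)*m^4))^2 \<le> 36 * (dd t 2 * dd t 4 * dd t 2 * dd t 4)"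
    by (rule coef_bound[OF e3 _ e1 e2]) (simp add: power2_eq_square)
  then show ?thesis unfolding good_def prod.case m_def[symmetric] by (simp add: pairs_def)
qed

lemma cb_25: assumes t: "t \<ge> 1" shows "good t ((- 2*t + 5 - (1/t) - (3/8)*(1/t)^4), 2, 4, 7, 8)"
proof -
  define m where "m = 1 / t"
  have tm: "t * m = 1" and m0: "0 < m" and m1: "m \<le> 1" using t by (auto simp: m_def)
  have p1: "0 \<le> m ^ k" and p2: "m ^ k \<le> 1" for k using m0 m1 by (auto simp: power_le_one)
  have t0: "t \<noteq> 0" using t by simp
  have e1: "((- 2*t + 5 - m - (3/8)*m^4)::real) = (- 2 + 5*m - m^2 - (3/8)*m^5) * t" unfolding m_def using t0 by (simp add: field_simps power_one_over eval_nat_numeral)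
  have e2: "dd t 2 * dd t 4 * dd t 7 * dd t 8 = 4 * (t)^2"
    unfolding dd_def v9_simps m_def power_one_over using t0 by (simp add: field_simps eval_nat_numeral)
  have e3: "\<bar>((- 2 + 5*m - m^2 - (3/8)*m^5)::real)\<bar> \<le> (67/8)" unfolding abs_le_iff using p1[of 1] p2[of 1] p1[of 2] p2[of 2] p1[of 5] p2[of 5] m0 m1 by linarith
  have "((- 2*t + 5 - m - (3/8)*m^4))^2 \<le> 36 * (dd t 2 * dd t 4 * dd t 7 * dd t 8)"
    by (rule coef_bound[OF e3 _ e1 e2]) (simp add: power2_eq_square)
  then show ?thesis unfolding good_def prod.case m_def[symmetric] by (simp add: pairs_def)
qed

lemma cb_26: assumes t: "t \<ge> 1" shows "good t ((- (7/8)*t + (1/4) + (1/8)*(1/t)), 2, 6, 2, 6)"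
proof -
  define m where "m = 1 / t"
  have tm: "t * m = 1" and m0: "0 < m" and m1: "m \<le> 1" using t by (auto simp: m_def)
  have p1: "0 \<le> m ^ k" and p2: "m ^ k \<le> 1" for k using m0 m1 by (auto simp: power_le_one)
  have t0: "t \<noteq> 0" using t by simp
  have e1: "((- (7/8)*t + (1/4) + (1/8)*m)::real) = (- (7/8) + (1/4)*m + (1/8)*m^2) * t" unfolding m_def using t0 by (simp add: field_simps power_one_over eval_nat_numeral)
  have e2: "dd t 2 * dd t 6 * dd t 2 * dd t 6 = 1 * (t)^2"
    unfolding dd_def v9_simps m_def power_one_over using t0 by (simp add: field_simps eval_nat_numeral)
  have e3: "\<bar>((- (7/8) + (1/4)*m + (1/8)*m^2)::real)\<bar> \<le> (5/4)" unfolding abs_le_iff using p1[of 1] p2[of 1] p1[of 2] p2[of 2] m0 m1 by linarith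
  have "((- (7/8)*t + (1/4) + (1/8)*m))^2 \<le> 36 * (dd t 2 * dd t 6 * dd t 2 * dd t 6)"
    by (rule coef_bound[OF e3 _ e1 e2]) (simp add: power2_eq_square)
  then show ?thesis unfolding good_def prod.case m_def[symmetric] by (simp add: pairs_def)
qed

lemma cb_27: assumes t: "t \<ge> 1" shows "good t (((5/4)*t - (1/2) + (1/4)*(1/t)), 2, 7, 2, 7)"
proof -
  define m where "m = 1 / t"
  have tm: "t * m = 1" and m0: "0 < m" and m1: "m \<le> 1" using t by (auto simp: m_def)
  have p1: "0 \<le> m ^ k" and p2: "m ^ k \<le> 1" for k using m0 m1 by (auto simp: power_le_one)
  have t0: "t \<noteq> 0" using t by simp
  have e1: "(((5/4)*t - (1/2) + (1/4)*m)::real) = ((5/4) - (1/2)*m + (1/4)*m^2) * t" unfolding m_def using t0 by (simp add: field_simps power_one_over eval_nat_numeral)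
  have e2: "dd t 2 * dd t 7 * dd t 2 * dd t 7 = 4 * (t)^2"
    unfolding dd_def v9_simps m_def power_one_over using t0 by (simp add: field_simps eval_nat_numeral)
  have e3: "\<bar>(((5/4) - (1/2)*m + (1/4)*m^2)::real)\<bar> \<le> 2" unfolding abs_le_iff using p1[of 1] p2[of 1] p1[of 2] p2[of 2] m0 m1 by linarith
  have "(((5/4)*t - (1/2) + (1/4)*m))^2 \<le> 36 * (dd t 2 * dd t 7 * dd t 2 * dd t 7)"
    by (rule coef_bound[OF e3 _ e1 e2]) (simp add: power2_eq_square)
  then show ?thesis unfolding good_def prod.case m_def[symmetric] by (simp add: pairs_def)
qed

lemma cb_28: assumes t: "t \<ge> 1" shows "good t (((5/2)*t - 1 + (1/2)*(1/t)), 2, 7, 4, 8)"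
proof -
  define m where "m = 1 / t"
  have tm: "t * m = 1" and m0: "0 < m" and m1: "m \<le> 1" using t by (auto simp: m_def)
  have p1: "0 \<le> m ^ k" and p2: "m ^ k \<le> 1" for k using m0 m1 by (auto simp: power_le_one)
  have t0: "t \<noteq> 0" using t by simp
  have e1: "(((5/2)*t - 1 + (1/2)*m)::real) = ((5/2) - m + (1/2)*m^2) * t" unfolding m_def using t0 by (simp add: field_simps power_one_over eval_nat_numeral)
  have e2: "dd t 2 * dd t 7 * dd t 4 * dd t 8 = 4 * (t)^2"
    unfolding dd_def v9_simps m_def power_one_over using t0 by (simp add: field_simps eval_nat_numeral)
  have e3: "\<bar>(((5/2) - m + (1/2)*m^2)::real)\<bar> \<le> 4" unfolding abs_le_iff using p1[of 1] p2[of 1] p1[of 2] p2[of 2] m0 m1 by linarith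
  have "(((5/2)*t - 1 + (1/2)*m))^2 \<le> 36 * (dd t 2 * dd t 7 * dd t 4 * dd t 8)"
    by (rule coef_bound[OF e3 _ e1 e2]) (simp add: power2_eq_square)
  then show ?thesis unfolding good_def prod.case m_def[symmetric] by (simp add: pairs_def)
qed

lemma cb_29: assumes t: "t \<ge> 1" shows "good t ((1), 3, 4, 3, 4)"
proof -
  define m where "m = 1 / t"
  have tm: "t * m = 1" and m0: "0 < m" and m1: "m \<le> 1" using t by (auto simp: m_def)
  have p1: "0 \<le> m ^ k" and p2: "m ^ k \<le> 1" for k using m0 m1 by (auto simp: power_le_one)
  have t0: "t \<noteq> 0" using t by simp
  have e1: "((1)::real) = (1) * 1" unfolding m_def using t0 by (simp add: field_simps power_one_over eval_nat_numeral)
  have e2: "dd t 3 * dd t 4 * dd t 3 * dd t 4 = 1 * (1)^2"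
    unfolding dd_def v9_simps m_def power_one_over using t0 by (simp add: field_simps eval_nat_numeral)
  have e3: "\<bar>((1)::real)\<bar> \<le> 1" unfolding abs_le_iff using  m0 m1 by linarith
  have "((1))^2 \<le> 36 * (dd t 3 * dd t 4 * dd t 3 * dd t 4)"
    by (rule coef_bound[OF e3 _ e1 e2]) (simp add: power2_eq_square)
  then show ?thesis unfolding good_def prod.case m_def[symmetric] by (simp add: pairs_def)
qed

lemma cb_30: assumes t: "t \<ge> 1" shows "good t (((1/2)*t + 2 - (1/2)*(1/t)), 3, 4, 5, 6)"
proof -
  define m where "m = 1 / t"
  have tm: "t * m = 1" and m0: "0 < m" and m1: "m \<le> 1" using t by (auto simp: m_def)
  have p1: "0 \<le> m ^ k" and p2: "m ^ k \<le> 1" for k using m0 m1 by (auto simp: power_le_one)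
  have t0: "t \<noteq> 0" using t by simp
  have e1: "(((1/2)*t + 2 - (1/2)*m)::real) = ((1/2) + 2*m - (1/2)*m^2) * t" unfolding m_def using t0 by (simp add: field_simps power_one_over eval_nat_numeral)
  have e2: "dd t 3 * dd t 4 * dd t 5 * dd t 6 = 1 * (t)^2"
    unfolding dd_def v9_simps m_def power_one_over using t0 by (simp add: field_simps eval_nat_numeral)
  have e3: "\<bar>(((1/2) + 2*m - (1/2)*m^2)::real)\<bar> \<le> 3" unfolding abs_le_iff using p1[of 1] p2[of 1] p1[of 2] p2[of 2] m0 m1 by linarith
  have "(((1/2)*t + 2 - (1/2)*m))^2 \<le> 36 * (dd t 3 * dd t 4 * dd t 5 * dd t 6)"
    by (rule coef_bound[OF e3 _ e1 e2]) (simp add: power2_eq_square)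
  then show ?thesis unfolding good_def prod.case m_def[symmetric] by (simp add: pairs_def)
qed

lemma cb_31: assumes t: "t \<ge> 1" shows "good t ((- (7/8)*t + (1/4) + (1/8)*(1/t)), 3, 5, 3, 5)"
proof -
  define m where "m = 1 / t"
  have tm: "t * m = 1" and m0: "0 < m" and m1: "m \<le> 1" using t by (auto simp: m_def)
  have p1: "0 \<le> m ^ k" and p2: "m ^ k \<le> 1" for k using m0 m1 by (auto simp: power_le_one)
  have t0: "t \<noteq> 0" using t by simp
  have e1: "((- (7/8)*t + (1/4) + (1/8)*m)::real) = (- (7/8) + (1/4)*m + (1/8)*m^2) * t" unfolding m_def using t0 by (simp add: field_simps power_one_over eval_nat_numeral)
  have e2: "dd t 3 * dd t 5 * dd t 3 * dd t 5 = 1 * (t)^2"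
    unfolding dd_def v9_simps m_def power_one_over using t0 by (simp add: field_simps eval_nat_numeral)
  have e3: "\<bar>((- (7/8) + (1/4)*m + (1/8)*m^2)::real)\<bar> \<le> (5/4)" unfolding abs_le_iff using p1[of 1] p2[of 1] p1[of 2] p2[of 2] m0 m1 by linarith
  have "((- (7/8)*t + (1/4) + (1/8)*m))^2 \<le> 36 * (dd t 3 * dd t 5 * dd t 3 * dd t 5)"
    by (rule coef_bound[OF e3 _ e1 e2]) (simp add: power2_eq_square)
  then show ?thesis unfolding good_def prod.case m_def[symmetric] by (simp add: pairs_def)
qed

lemma cb_32: assumes t: "t \<ge> 1" shows "good t ((- (7/4)*t + (1/2) + (1/4)*(1/t)), 3, 5, 4, 6)"
proof -
  define m where "m = 1 / t"
  have tm: "t * m = 1" and m0: "0 < m" and m1: "m \<le> 1" using t by (auto simp: m_def)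
  have p1: "0 \<le> m ^ k" and p2: "m ^ k \<le> 1" for k using m0 m1 by (auto simp: power_le_one)
  have t0: "t \<noteq> 0" using t by simp
  have e1: "((- (7/4)*t + (1/2) + (1/4)*m)::real) = (- (7/4) + (1/2)*m + (1/4)*m^2) * t" unfolding m_def using t0 by (simp add: field_simps power_one_over eval_nat_numeral)
  have e2: "dd t 3 * dd t 5 * dd t 4 * dd t 6 = 1 * (t)^2"
    unfolding dd_def v9_simps m_def power_one_over using t0 by (simp add: field_simps eval_nat_numeral)
  have e3: "\<bar>((- (7/4) + (1/2)*m + (1/4)*m^2)::real)\<bar> \<le> (5/2)" unfolding abs_le_iff using p1[of 1] p2[of 1] p1[of 2] p2[of 2] m0 m1 by linarith
  have "((- (7/4)*t + (1/2) + (1/4)*m))^2 \<le> 36 * (dd t 3 * dd t 5 * dd t 4 * dd t 6)"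
    by (rule coef_bound[OF e3 _ e1 e2]) (simp add: power2_eq_square)
  then show ?thesis unfolding good_def prod.case m_def[symmetric] by (simp add: pairs_def)
qed

lemma cb_33: assumes t: "t \<ge> 1" shows "good t (((5/4)*t - (1/2) + (1/4)*(1/t)), 3, 8, 3, 8)"
proof -
  define m where "m = 1 / t"
  have tm: "t * m = 1" and m0: "0 < m" and m1: "m \<le> 1" using t by (auto simp: m_def)
  have p1: "0 \<le> m ^ k" and p2: "m ^ k \<le> 1" for k using m0 m1 by (auto simp: power_le_one)
  have t0: "t \<noteq> 0" using t by simp
  have e1: "(((5/4)*t - (1/2) + (1/4)*m)::real) = ((5/4) - (1/2)*m + (1/4)*m^2) * t" unfolding m_def using t0 by (simp add: field_simps power_one_over eval_nat_numeral)
  have e2: "dd t 3 * dd t 8 * dd t 3 * dd t 8 = 4 * (t)^2"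
    unfolding dd_def v9_simps m_def power_one_over using t0 by (simp add: field_simps eval_nat_numeral)
  have e3: "\<bar>(((5/4) - (1/2)*m + (1/4)*m^2)::real)\<bar> \<le> 2" unfolding abs_le_iff using p1[of 1] p2[of 1] p1[of 2] p2[of 2] m0 m1 by linarith
  have "(((5/4)*t - (1/2) + (1/4)*m))^2 \<le> 36 * (dd t 3 * dd t 8 * dd t 3 * dd t 8)"
    by (rule coef_bound[OF e3 _ e1 e2]) (simp add: power2_eq_square)
  then show ?thesis unfolding good_def prod.case m_def[symmetric] by (simp add: pairs_def)
qed

lemma cb_34: assumes t: "t \<ge> 1" shows "good t ((- (7/8)*t + (1/4) + (1/8)*(1/t)), 4, 6, 4, 6)"
proof -
  define m where "m = 1 / t"
  have tm: "t * m = 1" and m0: "0 < m" and m1: "m \<le> 1" using t by (auto simp: m_def)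
  have p1: "0 \<le> m ^ k" and p2: "m ^ k \<le> 1" for k using m0 m1 by (auto simp: power_le_one)
  have t0: "t \<noteq> 0" using t by simp
  have e1: "((- (7/8)*t + (1/4) + (1/8)*m)::real) = (- (7/8) + (1/4)*m + (1/8)*m^2) * t" unfolding m_def using t0 by (simp add: field_simps power_one_over eval_nat_numeral)
  have e2: "dd t 4 * dd t 6 * dd t 4 * dd t 6 = 1 * (t)^2"
    unfolding dd_def v9_simps m_def power_one_over using t0 by (simp add: field_simps eval_nat_numeral)
  have e3: "\<bar>((- (7/8) + (1/4)*m + (1/8)*m^2)::real)\<bar> \<le> (5/4)" unfolding abs_le_iff using p1[of 1] p2[of 1] p1[of 2] p2[of 2] m0 m1 by linarith
  have "((- (7/8)*t + (1/4) + (1/8)*m))^2 \<le> 36 * (dd t 4 * dd t 6 * dd t 4 * dd t 6)"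
    by (rule coef_bound[OF e3 _ e1 e2]) (simp add: power2_eq_square)
  then show ?thesis unfolding good_def prod.case m_def[symmetric] by (simp add: pairs_def)
qed

lemma cb_35: assumes t: "t \<ge> 1" shows "good t (((5/4)*t - (1/2) + (1/4)*(1/t)), 4, 8, 4, 8)"
proof -
  define m where "m = 1 / t"
  have tm: "t * m = 1" and m0: "0 < m" and m1: "m \<le> 1" using t by (auto simp: m_def)
  have p1: "0 \<le> m ^ k" and p2: "m ^ k \<le> 1" for k using m0 m1 by (auto simp: power_le_one)
  have t0: "t \<noteq> 0" using t by simp
  have e1: "(((5/4)*t - (1/2) + (1/4)*m)::real) = ((5/4) - (1/2)*m + (1/4)*m^2) * t" unfolding m_def using t0 by (simp add: field_simps power_one_over eval_nat_numeral)
  have e2: "dd t 4 * dd t 8 * dd t 4 * dd t 8 = 4 * (t)^2"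
    unfolding dd_def v9_simps m_def power_one_over using t0 by (simp add: field_simps eval_nat_numeral)
  have e3: "\<bar>(((5/4) - (1/2)*m + (1/4)*m^2)::real)\<bar> \<le> 2" unfolding abs_le_iff using p1[of 1] p2[of 1] p1[of 2] p2[of 2] m0 m1 by linarith
  have "(((5/4)*t - (1/2) + (1/4)*m))^2 \<le> 36 * (dd t 4 * dd t 8 * dd t 4 * dd t 8)"
    by (rule coef_bound[OF e3 _ e1 e2]) (simp add: power2_eq_square)
  then show ?thesis unfolding good_def prod.case m_def[symmetric] by (simp add: pairs_def)
qed

lemma cb_36: assumes t: "t \<ge> 1" shows "good t ((t), 5, 6, 5, 6)"
proof -
  define m where "m = 1 / t"
  have tm: "t * m = 1" and m0: "0 < m" and m1: "m \<le> 1" using t by (auto simp: m_def)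
  have p1: "0 \<le> m ^ k" and p2: "m ^ k \<le> 1" for k using m0 m1 by (auto simp: power_le_one)
  have t0: "t \<noteq> 0" using t by simp
  have e1: "((t)::real) = (m) * t^2" unfolding m_def using t0 by (simp add: field_simps power_one_over eval_nat_numeral)
  have e2: "dd t 5 * dd t 6 * dd t 5 * dd t 6 = 1 * (t^2)^2"
    unfolding dd_def v9_simps m_def power_one_over using t0 by (simp add: field_simps eval_nat_numeral)
  have e3: "\<bar>((m)::real)\<bar> \<le> 1" unfolding abs_le_iff using p1[of 1] p2[of 1] m0 m1 by linarith
  have "((t))^2 \<le> 36 * (dd t 5 * dd t 6 * dd t 5 * dd t 6)"
    by (rule coef_bound[OF e3 _ e1 e2]) (simp add: power2_eq_square)
  then show ?thesis unfolding good_def prod.case m_def[symmetric] by (simp add: pairs_def)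
qed

lemma cb_37: assumes t: "t \<ge> 1" shows "good t (((1/4)*t^2 + (3/2)*t - (3/4)), 5, 7, 5, 7)"
proof -
  define m where "m = 1 / t"
  have tm: "t * m = 1" and m0: "0 < m" and m1: "m \<le> 1" using t by (auto simp: m_def)
  have p1: "0 \<le> m ^ k" and p2: "m ^ k \<le> 1" for k using m0 m1 by (auto simp: power_le_one)
  have t0: "t \<noteq> 0" using t by simp
  have e1: "(((1/4)*t^2 + (3/2)*t - (3/4))::real) = ((1/4) + (3/2)*m - (3/4)*m^2) * t^2" unfolding m_def using t0 by (simp add: field_simps power_one_over eval_nat_numeral)
  have e2: "dd t 5 * dd t 7 * dd t 5 * dd t 7 = 4 * (t^2)^2"
    unfolding dd_def v9_simps m_def power_one_over using t0 by (simp add: field_simps eval_nat_numeral)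
  have e3: "\<bar>(((1/4) + (3/2)*m - (3/4)*m^2)::real)\<bar> \<le> (5/2)" unfolding abs_le_iff using p1[of 1] p2[of 1] p1[of 2] p2[of 2] m0 m1 by linarith
  have "(((1/4)*t^2 + (3/2)*t - (3/4)))^2 \<le> 36 * (dd t 5 * dd t 7 * dd t 5 * dd t 7)"
    by (rule coef_bound[OF e3 _ e1 e2]) (simp add: power2_eq_square)
  then show ?thesis unfolding good_def prod.case m_def[symmetric] by (simp add: pairs_def)
qed

lemma cb_38: assumes t: "t \<ge> 1" shows "good t (((1/4)*t^2 + (3/2)*t - (3/4)), 5, 8, 5, 8)"
proof -
  define m where "m = 1 / t"
  have tm: "t * m = 1" and m0: "0 < m" and m1: "m \<le> 1" using t by (auto simp: m_def)
  have p1: "0 \<le> m ^ k" and p2: "m ^ k \<le> 1" for k using m0 m1 by (auto simp: power_le_one)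
  have t0: "t \<noteq> 0" using t by simp
  have e1: "(((1/4)*t^2 + (3/2)*t - (3/4))::real) = ((1/4) + (3/2)*m - (3/4)*m^2) * t^2" unfolding m_def using t0 by (simp add: field_simps power_one_over eval_nat_numeral)
  have e2: "dd t 5 * dd t 8 * dd t 5 * dd t 8 = 4 * (t^2)^2"
    unfolding dd_def v9_simps m_def power_one_over using t0 by (simp add: field_simps eval_nat_numeral)
  have e3: "\<bar>(((1/4) + (3/2)*m - (3/4)*m^2)::real)\<bar> \<le> (5/2)" unfolding abs_le_iff using p1[of 1] p2[of 1] p1[of 2] p2[of 2] m0 m1 by linarith
  have "(((1/4)*t^2 + (3/2)*t - (3/4)))^2 \<le> 36 * (dd t 5 * dd t 8 * dd t 5 * dd t 8)"
    by (rule coef_bound[OF e3 _ e1 e2]) (simp add: power2_eq_square)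
  then show ?thesis unfolding good_def prod.case m_def[symmetric] by (simp add: pairs_def)
qed

lemma cb_39: assumes t: "t \<ge> 1" shows "good t (((1/4)*t^2 + (3/2)*t - (3/4)), 6, 7, 6, 7)"
proof -
  define m where "m = 1 / t"
  have tm: "t * m = 1" and m0: "0 < m" and m1: "m \<le> 1" using t by (auto simp: m_def)
  have p1: "0 \<le> m ^ k" and p2: "m ^ k \<le> 1" for k using m0 m1 by (auto simp: power_le_one)
  have t0: "t \<noteq> 0" using t by simp
  have e1: "(((1/4)*t^2 + (3/2)*t - (3/4))::real) = ((1/4) + (3/2)*m - (3/4)*m^2) * t^2" unfolding m_def using t0 by (simp add: field_simps power_one_over eval_nat_numeral)
  have e2: "dd t 6 * dd t 7 * dd t 6 * dd t 7 = 4 * (t^2)^2"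
    unfolding dd_def v9_simps m_def power_one_over using t0 by (simp add: field_simps eval_nat_numeral)
  have e3: "\<bar>(((1/4) + (3/2)*m - (3/4)*m^2)::real)\<bar> \<le> (5/2)" unfolding abs_le_iff using p1[of 1] p2[of 1] p1[of 2] p2[of 2] m0 m1 by linarith
  have "(((1/4)*t^2 + (3/2)*t - (3/4)))^2 \<le> 36 * (dd t 6 * dd t 7 * dd t 6 * dd t 7)"
    by (rule coef_bound[OF e3 _ e1 e2]) (simp add: power2_eq_square)
  then show ?thesis unfolding good_def prod.case m_def[symmetric] by (simp add: pairs_def)
qed

lemma cb_40: assumes t: "t \<ge> 1" shows "good t (((1/4)*t^2 + (3/2)*t - (3/4)), 6, 8, 6, 8)"
proof -
  define m where "m = 1 / t"
  have tm: "t * m = 1" and m0: "0 < m" and m1: "m \<le> 1" using t by (auto simp: m_def)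
  have p1: "0 \<le> m ^ k" and p2: "m ^ k \<le> 1" for k using m0 m1 by (auto simp: power_le_one)
  have t0: "t \<noteq> 0" using t by simp
  have e1: "(((1/4)*t^2 + (3/2)*t - (3/4))::real) = ((1/4) + (3/2)*m - (3/4)*m^2) * t^2" unfolding m_def using t0 by (simp add: field_simps power_one_over eval_nat_numeral)
  have e2: "dd t 6 * dd t 8 * dd t 6 * dd t 8 = 4 * (t^2)^2"
    unfolding dd_def v9_simps m_def power_one_over using t0 by (simp add: field_simps eval_nat_numeral)
  have e3: "\<bar>(((1/4) + (3/2)*m - (3/4)*m^2)::real)\<bar> \<le> (5/2)" unfolding abs_le_iff using p1[of 1] p2[of 1] p1[of 2] p2[of 2] m0 m1 by linarith
  have "(((1/4)*t^2 + (3/2)*t - (3/4)))^2 \<le> 36 * (dd t 6 * dd t 8 * dd t 6 * dd t 8)"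
    by (rule coef_bound[OF e3 _ e1 e2]) (simp add: power2_eq_square)
  then show ?thesis unfolding good_def prod.case m_def[symmetric] by (simp add: pairs_def)
qed

lemma cb_41: assumes t: "t \<ge> 1" shows "good t ((2*t - (3/16)*(1/t)^4), 7, 8, 7, 8)"
proof -
  define m where "m = 1 / t"
  have tm: "t * m = 1" and m0: "0 < m" and m1: "m \<le> 1" using t by (auto simp: m_def)
  have p1: "0 \<le> m ^ k" and p2: "m ^ k \<le> 1" for k using m0 m1 by (auto simp: power_le_one)
  have t0: "t \<noteq> 0" using t by simp
  have e1: "((2*t - (3/16)*m^4)::real) = (2*m - (3/16)*m^6) * t^2" unfolding m_def using t0 by (simp add: field_simps power_one_over eval_nat_numeral)
  have e2: "dd t 7 * dd t 8 * dd t 7 * dd t 8 = 16 * (t^2)^2"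
    unfolding dd_def v9_simps m_def power_one_over using t0 by (simp add: field_simps eval_nat_numeral)
  have e3: "\<bar>((2*m - (3/16)*m^6)::real)\<bar> \<le> (35/16)" unfolding abs_le_iff using p1[of 1] p2[of 1] p1[of 6] p2[of 6] m0 m1 by linarith
  have "((2*t - (3/16)*m^4))^2 \<le> 36 * (dd t 7 * dd t 8 * dd t 7 * dd t 8)"
    by (rule coef_bound[OF e3 _ e1 e2]) (simp add: power2_eq_square)
  then show ?thesis unfolding good_def prod.case m_def[symmetric] by (simp add: pairs_def)
qed

lemmas cbs = cb_0 cb_1 cb_2 cb_3 cb_4 cb_5 cb_6 cb_7 cb_8 cb_9 cb_10 cb_11 cb_12 cb_13 cb_14 cb_15 cb_16 cb_17 cb_18 cb_19 cb_20 cb_21 cb_22 cb_23 cb_24 cb_25 cb_26 cb_27 cb_28 cb_29 cb_30 cb_31 cb_32 cb_33 cb_34 cb_35 cb_36 cb_37 cb_38 cb_39 cb_40 cb_41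



lemma all_good: "t \<ge> 1 \<Longrightarrow> \<forall>z\<in>set (terms t (1/t)). good t z"
  unfolding terms_def by (simp only: list.set insert_iff empty_iff ball_simps cbs simp_thms)

lemma PL_bound: assumes "t \<ge> 1" shows "\<bar>PL t (1/t) x y\<bar> \<le> 252 * DEN t x y"
proof -
  have "\<bar>PL t (1/t) x y\<bar> \<le> real (length (terms t (1/t))) * (6 * DEN t x y)"
    unfolding PL_def
    by (rule sum_list_abs_bound) (use all_good[OF assms] term_bound assms in auto)
  also have "length (terms t (1/t)) = 42" by (simp add: terms_def)
  finally show ?thesis by simp
qed

definition Sm :: "(9 \<Rightarrow> 9 \<Rightarrow> real) \<Rightarrow> 9 \<Rightarrow> 9 \<Rightarrow> real" where
  "Sm F a c = (\<Sum>i\<in>UNIV. F i a * F i c)"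

lemma sum_prod_swap: "(\<Sum>i\<in>A. \<Sum>j\<in>B. f i * g j) = (\<Sum>i\<in>A. f i) * (\<Sum>j\<in>B. (g j::real))"
  by (simp add: sum_product)


lemma sum_pl: "(\<Sum>i\<in>UNIV. \<Sum>j\<in>UNIV. pl (F i) (F j) a b * pl (F i) (F j) c d)
   = 2 * (Sm F a c * Sm F b d - Sm F a d * Sm F b c)"
proof -
  have e: "pl (F i) (F j) a b * pl (F i) (F j) c d = (F i a * F i c) * (F j b * F j d)
     - (F i a * F i d) * (F j b * F j c) - (F i b * F i c) * (F j a * F j d) + (F i b * F i d) * (F j a * F j c)" for i j
    by (simp add: pl_def algebra_simps)
  have "(\<Sum>i\<in>UNIV. \<Sum>j\<in>UNIV. pl (F i) (F j) a b * pl (F i) (F j) c d) =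
     (\<Sum>i\<in>UNIV. \<Sum>j\<in>UNIV. (F i a * F i c) * (F j b * F j d)) - (\<Sum>i\<in>UNIV. \<Sum>j\<in>UNIV. (F i a * F i d) * (F j b * F j c))
     - (\<Sum>i\<in>UNIV. \<Sum>j\<in>UNIV. (F i b * F i c) * (F j a * F j d)) + (\<Sum>i\<in>UNIV. \<Sum>j\<in>UNIV. (F i b * F i d) * (F j a * F j c))"
    unfolding e by (simp add: sum.distrib sum_subtractf)
  also have "\<dots> = Sm F a c * Sm F b d - Sm F a d * Sm F b c - Sm F b c * Sm F a d + Sm F b d * Sm F a c"
    by (simp only: sum_prod_swap Sm_def)
  finally show ?thesis by (simp add: algebra_simps)
qed


lemma Sm_onb:
  fixes F :: "9 \<Rightarrow> 9 \<Rightarrow> real" and d :: "9 \<Rightarrow> real"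
  assumes d: "\<And>k. d k > 0" and o: "\<And>i j. (\<Sum>k\<in>UNIV. d k * F i k * F j k) = (if i = j then 1 else 0)"
  shows "Sm F a c = (if a = c then 1 / d a else 0)"
proof -
  define G :: "real^9^9" where "G = (\<chi> i k. F i k * sqrt (d k))"
  have sq: "sqrt (d k) * sqrt (d k) = d k" for k using d[of k] by simp
  have "G ** transpose G = mat 1"
  proof -
    have "(G ** transpose G) $ i $ j = mat 1 $ i $ j" for i j
    proof -
      have "(G ** transpose G) $ i $ j = (\<Sum>k\<in>UNIV. F i k * sqrt (d k) * (F j k * sqrt (d k)))"
        unfolding G_def mat_entry transpose_def by simp
      also have "\<dots> = (\<Sum>k\<in>UNIV. d k * F i k * F j k)"
      proof (rule sum.cong)
        fix k
        have "F i k * sqrt (d k) * (F j k * sqrt (d k)) = (sqrt (d k) * sqrt (d k)) * F i k * F j k"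
          by (simp only: mult_ac)
        then show "F i k * sqrt (d k) * (F j k * sqrt (d k)) = d k * F i k * F j k" by (simp only: sq)
      qed simp
      also have "\<dots> = mat 1 $ i $ j" using o by (simp add: mat_def)
      finally show ?thesis .
    qed
    then show ?thesis by (simp add: vec_eq_iff)
  qed
  then have T: "transpose G ** G = mat 1" using matrix_left_right_inverse by blast
  have "(transpose G ** G) $ a $ c = (\<Sum>i\<in>UNIV. F i a * sqrt (d a) * (F i c * sqrt (d c)))"
    unfolding mat_entry transpose_def G_def by simp
  also have "\<dots> = sqrt (d a) * sqrt (d c) * Sm F a c"
    unfolding Sm_def by (simp add: sum_distrib_left algebra_simps)
  finally have "sqrt (d a) * sqrt (d c) * Sm F a c = (if a = c then 1 else 0)" using T by (simp add: mat_def)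
  moreover have "sqrt (d a) > 0" "sqrt (d c) > 0" using d by auto
  ultimately show ?thesis
  proof (cases "a = c")
    case True
    then have "d a * Sm F a c = 1" using \<open>sqrt (d a) * sqrt (d c) * Sm F a c = (if a = c then 1 else 0)\<close> sq[of a] by simp
    then show ?thesis using True d[of a] by (simp add: field_simps)
  next
    case False
    then show ?thesis using \<open>sqrt (d a) * sqrt (d c) * Sm F a c = (if a = c then 1 else 0)\<close> \<open>sqrt (d a) > 0\<close> \<open>sqrt (d c) > 0\<close> by simp
  qed
qed


lemma onb_exists: assumes n: "n \<ge> 1" shows "\<exists>f. is_onb (gseq n) f"
proof -
  define d where "d = dd (real n)"
  have dpos: "d k > 0" for k using n dd_pos unfolding d_def by simp
  define f where "f i = S (\<lambda>k. if k = i then 1 / sqrt (d i) else 0) 0" for i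
  have "is_onb (gseq n) f"
    unfolding is_onb_def
  proof (intro conjI allI)
    fix i show "f i \<in> mspace" unfolding f_def by (rule S_in_mspace)
  next
    fix i j
    have "gform (gseq n) (f i) (f j) = (\<Sum>k\<in>UNIV. d k * (if k = i then 1 / sqrt (d i) else 0) * (if k = j then 1 / sqrt (d j) else 0))"
      unfolding gform_gseq f_def Qf_mb_S d_def ..
    also have "\<dots> = (\<Sum>k\<in>UNIV. if k = i then (if i = j then d i / (sqrt (d i) * sqrt (d i)) else 0) else 0)"
      by (rule sum.cong) auto
    also have "\<dots> = (if i = j then 1 else 0)"
      using dpos[of i] by auto
    finally show "gform (gseq n) (f i) (f j) = (if i = j then 1 else 0)" .
  qed
  then show ?thesis by blast
qed


lemma sum_sum_list: "(\<Sum>i\<in>A. \<Sum>j\<in>B. sum_list (map (g i j) xs)) = sum_list (map (\<lambda>x. \<Sum>i\<in>A. \<Sum>j\<in>B. (g i j x::real)) xs)"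
  by (induction xs) (simp_all add: sum.distrib)

lemma sum_term: "(\<Sum>i\<in>UNIV. \<Sum>j\<in>UNIV. (\<lambda>(c,a,b,c',d). c * pl (F i) (F j) a b * pl (F i) (F j) c' d) z)
  = (\<lambda>(c,a,b,c',d). c * (2 * (Sm F a c' * Sm F b d - Sm F a d * Sm F b c'))) z"
proof -
  obtain c a b c' d where z: "z = (c,a,b,c',d)" by (cases z) auto
  have "(\<Sum>i\<in>UNIV. \<Sum>j\<in>UNIV. c * pl (F i) (F j) a b * pl (F i) (F j) c' d)
      = c * (\<Sum>i\<in>UNIV. \<Sum>j\<in>UNIV. pl (F i) (F j) a b * pl (F i) (F j) c' d)"
    by (simp add: sum_distrib_left mult.assoc)
  then show ?thesis unfolding z by (simp add: sum_pl)
qed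

lemma pl_self: "pl x x a b = 0" by (simp add: pl_def mult.commute)

lemma PL_self: "PL t m x x = 0"
proof -
  have "(\<lambda>z. (\<lambda>(c,a,b,c',d). c * pl x x a b * pl x x c' d) z) = (\<lambda>z. 0)"
    by (auto simp: pl_self split: prod.splits)
  then show ?thesis unfolding PL_def by simp
qed

lemma scal_gseq: assumes n: "n \<ge> 1"
  shows "scal (gseq n) = (224 * real n ^ 6 + 288 * real n ^ 5 - 32 * real n ^ 4 - 8 * real n ^ 2 - 1) / (32 * real n ^ 6)"
proof -
  define t where "t = real n"
  have t1: "t \<ge> 1" using n by (simp add: t_def)
  define f where "f = (SOME f. is_onb (gseq n) f)"
  have onb: "is_onb (gseq n) f" unfolding f_def using someI_ex[OF onb_exists[OF n]] .
  define F where "F i k = Qf (mb k) (f i)" for i k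
  have fS: "f i = S (F i) 0" for i
  proof -
    obtain c where c: "f i = S c 0" using onb mspace_iff unfolding is_onb_def by blast
    then have "F i = c" by (simp add: F_def Qf_mb_S fun_eq_iff)
    then show ?thesis using c by simp
  qed
  have g: "gform (gseq n) (f i) (f j) = (\<Sum>k\<in>UNIV. dd t k * F i k * F j k)" for i j
    unfolding gform_gseq F_def t_def ..
  have ortho: "(\<Sum>k\<in>UNIV. dd t k * F i k * F j k) = (if i = j then 1 else 0)" for i j
    using onb unfolding is_onb_def g by simp
  have Sm_eq: "Sm F a c = (if a = c then 1 / dd t a else 0)" for a c
    by (rule Sm_onb[OF _ ortho]) (use dd_pos t1 in auto)
  have sec: "seccurv (gseq n) (f i) (f j) = PL t (1/t) (F i) (F j)" if "i \<noteq> j" for i j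
  proof -
    have "gform (gseq n) (f i) (f i) = 1" "gform (gseq n) (f j) (f j) = 1" "gform (gseq n) (f i) (f j) = 0"
      using onb that unfolding is_onb_def by auto
    then have "seccurv (gseq n) (f i) (f j) = curvnum (gseq n) (f i) (f j)"
      unfolding seccurv_def by simp
    also have "\<dots> = PL t (1/t) (F i) (F j)" unfolding fS t_def by (rule curvnum_S[OF n])
    finally show ?thesis .
  qed
  have "scal (gseq n) = (\<Sum>i\<in>UNIV. \<Sum>j\<in>UNIV. PL t (1/t) (F i) (F j))"
    unfolding scal_def Let_def f_def[symmetric]
    by (intro sum.cong refl) (auto simp: sec PL_self)
  also have "\<dots> = sum_list (map (\<lambda>(c,a,b,c',d). c * (2 * (Sm F a c' * Sm F b d - Sm F a d * Sm F b c'))) (terms t (1/t)))"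
    unfolding PL_def sum_sum_list sum_term ..
  also have "\<dots> = (224 * t ^ 6 + 288 * t ^ 5 - 32 * t ^ 4 - 8 * t ^ 2 - 1) / (32 * t ^ 6)"
    unfolding Sm_eq terms_def using t1 by (simp add: dd_def field_simps eval_nat_numeral)
  finally show ?thesis unfolding t_def .
qed

lemma Hrot_nth: "Hrot s $ i $ j = (if i = 4 \<and> j = 4 then cos s else if i = 5 \<and> j = 5 then cos s
                    else if i = 4 \<and> j = 5 then sin s else if i = 5 \<and> j = 4 then - sin s
                    else if i = j then 1 else 0)"
  by (simp add: Hrot_def)

lemma Hrot_orth: "Hrot s ** transpose (Hrot s) = mat 1" "transpose (Hrot s) ** Hrot s = mat 1"
  unfolding vec_eq_iff all5 mat_entry sum5 transpose_def by (simp_all add: Hrot_nth mat_def algebra_simps)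


lemma matrix_inv_eq:
  fixes A B :: "real^5^5"
  assumes "A ** B = mat 1" "B ** A = mat 1"
  shows "matrix_inv A = B"
  unfolding matrix_inv_def
proof (rule some_equality)
  show "A ** B = mat 1 \<and> B ** A = mat 1" using assms by simp
next
  fix A' assume "A ** A' = mat 1 \<and> A' ** A = mat 1"
  then have "A' = A' ** (A ** B)" "A' ** A = mat 1" using assms by (simp_all add: matrix_mul_rid)
  then show "A' = B" by (simp add: matrix_mul_assoc matrix_mul_lid)
qed

lemma Ad_S: "Ad (Hrot s) (S x 0) = S (v9 (x 0) (cos s * x 1 + sin s * x 2) (- sin s * x 1 + cos s * x 2)
    (cos s * x 3 + sin s * x 4) (- sin s * x 3 + cos s * x 4) (cos s * x 5 + sin s * x 6) (- sin s * x 5 + cos s * x 6)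
    (x 7) (x 8)) 0"
  unfolding Ad_def matrix_inv_eq[OF Hrot_orth] vec_eq_iff all5 mat_entry sum5 transpose_def
  by (simp add: Hrot_nth algebra_simps)


lemma gform_Ad: assumes "h \<in> Hgrp" "X \<in> mspace" "Y \<in> mspace"
  shows "gform (gseq n) (Ad h X) (Ad h Y) = gform (gseq n) X Y"
proof -
  obtain s where h: "h = Hrot s" using assms(1) unfolding Hgrp_def by auto
  obtain x where X: "X = S x 0" using assms(2) mspace_iff by blast
  obtain y where Y: "Y = S y 0" using assms(3) mspace_iff by blast
  have cs: "cos s * cos s + sin s * sin s = 1" by simp
  have e1: "(cos s * a + sin s * b) * (cos s * a' + sin s * b') + (- sin s * a + cos s * b) * (- sin s * a' + cos s * b')
     = a * a' + b * b'" for a b a' b' :: real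
  proof -
    have "(cos s * a + sin s * b) * (cos s * a' + sin s * b') + (- sin s * a + cos s * b) * (- sin s * a' + cos s * b')
       = (cos s * cos s + sin s * sin s) * (a * a' + b * b')" by (simp add: algebra_simps del: sin_cos_squared_add3)
    then show ?thesis using cs by simp
  qed
  have "gform (gseq n) (Ad h X) (Ad h Y) =
     dd (real n) 0 * x 0 * y 0 + ((cos s * x 1 + sin s * x 2) * (cos s * y 1 + sin s * y 2) + (- sin s * x 1 + cos s * x 2) * (- sin s * y 1 + cos s * y 2))
     + ((cos s * x 3 + sin s * x 4) * (cos s * y 3 + sin s * y 4) + (- sin s * x 3 + cos s * x 4) * (- sin s * y 3 + cos s * y 4))
     + real n * ((cos s * x 5 + sin s * x 6) * (cos s * y 5 + sin s * y 6) + (- sin s * x 5 + cos s * x 6) * (- sin s * y 5 + cos s * y 6))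
     + dd (real n) 7 * x 7 * y 7 + dd (real n) 8 * x 8 * y 8"
    unfolding h X Y Ad_S gform_S v9_simps by (simp add: dd_def algebra_simps)
  also have "\<dots> = dd (real n) 0 * x 0 * y 0 + (x 1 * y 1 + x 2 * y 2) + (x 3 * y 3 + x 4 * y 4)
     + real n * (x 5 * y 5 + x 6 * y 6) + dd (real n) 7 * x 7 * y 7 + dd (real n) 8 * x 8 * y 8"
    unfolding e1 ..
  also have "\<dots> = gform (gseq n) X Y"
    unfolding X Y gform_S by (simp add: dd_def algebra_simps)
  finally show ?thesis .
qed


lemma prod9: "(\<Prod>k\<in>(UNIV::9 set). f k) = f 0 * f 1 * f 2 * f 3 * f 4 * f 5 * f 6 * f 7 * f 8"
  unfolding U9 by (simp add: ac_simps)

lemma gseq_M1: assumes n: "n \<ge> 1" shows "gseq n \<in> M1"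
proof -
  have t: "real n > 0" using n by simp
  have sym: "transpose (gseq n) = gseq n"
    unfolding vec_eq_iff transpose_def by (simp add: gseq_entry)
  have pd: "v \<bullet> (gseq n *v v) > 0" if "v \<noteq> 0" for v
  proof -
    obtain i where i: "v $ i \<noteq> 0" using \<open>v \<noteq> 0\<close> by (auto simp: vec_eq_iff)
    have mv: "(gseq n *v v) $ k = dd (real n) k * v $ k" for k
    proof -
      have "(gseq n *v v) $ k = (\<Sum>j\<in>UNIV. (if k = j then dd (real n) k else 0) * v $ j)"
        unfolding matrix_vector_mult_def gseq_entry by simp
      also have "\<dots> = (\<Sum>j\<in>UNIV. if j = k then dd (real n) k * v $ k else 0)"
        by (rule sum.cong) auto
      finally have "(gseq n *v v) $ k = (\<Sum>j\<in>UNIV. if j = k then dd (real n) k * v $ k else 0)" .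
      then show ?thesis by simp
    qed
    have "v \<bullet> (gseq n *v v) = (\<Sum>k\<in>UNIV. dd (real n) k * (v $ k)^2)"
      unfolding inner_vec_def mv by (rule sum.cong) (simp_all add: power2_eq_square)
    also have "\<dots> > 0"
      by (rule sum_pos2[where i=i]) (simp_all add: i dd_pos[OF t] dd_nonneg[OF t])
    finally show ?thesis .
  qed
  have det: "det (gseq n) = 1"
  proof -
    have "det (gseq n) = (\<Prod>k\<in>UNIV. gseq n $ k $ k)"
      by (rule det_diagonal) (simp add: gseq_entry)
    also have "\<dots> = 1" using t unfolding prod9 gseq_entry by (simp add: dd_def field_simps eval_nat_numeral)
    finally show ?thesis .
  qed
  show ?thesis unfolding M1_def InvMetrics_def
    using sym pd det gform_Ad by auto
qed

lemma gseq_88: "gseq n $ 8 $ 8 = 2 * real n"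
  by (simp add: gseq_entry dd_def)

lemma diverge: "\<not> (\<exists>K. compact K \<and> K \<subseteq> M1 \<and> (\<forall>n\<ge>1. gseq n \<in> K))"
proof
  assume "\<exists>K. compact K \<and> K \<subseteq> M1 \<and> (\<forall>n\<ge>1. gseq n \<in> K)"
  then obtain K where K: "compact K" "\<forall>n\<ge>1. gseq n \<in> K" by blast
  then have "bounded K" by (simp add: compact_imp_bounded)
  then obtain a where a: "\<forall>x\<in>K. norm x \<le> a" unfolding bounded_iff by blast
  define n where "n = nat \<lceil>a\<rceil> + 1"
  have n1: "n \<ge> 1" by (simp add: n_def)
  have "\<bar>gseq n $ 8 $ 8\<bar> \<le> norm (gseq n $ 8)" by (rule component_le_norm_cart)
  also have "\<dots> \<le> norm (gseq n)" by (rule Finite_Cartesian_Product.norm_nth_le)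
  also have "\<dots> \<le> a" using a K(2) n1 by blast
  finally have "2 * real n \<le> a" by (simp add: gseq_88)
  moreover have "real n > a" unfolding n_def by linarith
  moreover have "real n \<ge> 1" using n1 by simp
  ultimately show False by linarith
qed


lemma curv_bounded: "\<exists>C. \<forall>n\<ge>1. \<forall>X\<in>mspace. \<forall>Y\<in>mspace.
          gform (gseq n) X X * gform (gseq n) Y Y - (gform (gseq n) X Y)^2 \<noteq> 0
          \<longrightarrow> \<bar>seccurv (gseq n) X Y\<bar> \<le> C"
proof (intro exI allI impI ballI)
  fix n :: nat and X Y assume n: "n \<ge> 1" and XY: "X \<in> mspace" "Y \<in> mspace"
    and nz: "gform (gseq n) X X * gform (gseq n) Y Y - (gform (gseq n) X Y)^2 \<noteq> 0"
  obtain x where X: "X = S x 0" using XY(1) mspace_iff by blast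
  obtain y where Y: "Y = S y 0" using XY(2) mspace_iff by blast
  have t: "real n \<ge> 1" "real n > 0" using n by auto
  have den: "gform (gseq n) X X * gform (gseq n) Y Y - (gform (gseq n) X Y)^2 = DEN (real n) x y"
    unfolding X Y by (rule lagrange)
  have D: "DEN (real n) x y > 0" using DEN_nonneg[OF t(2), of x y] nz den by linarith
  have "seccurv (gseq n) X Y = PL (real n) (1 / real n) x y / DEN (real n) x y"
    unfolding seccurv_def den unfolding X Y curvnum_S[OF n] ..
  moreover have "\<bar>PL (real n) (1 / real n) x y\<bar> \<le> 252 * DEN (real n) x y" by (rule PL_bound[OF t(1)])
  ultimately show "\<bar>seccurv (gseq n) X Y\<bar> \<le> 252" using D by (simp add: abs_divide pos_divide_le_eq)
qed


lemma scal_lim: "(\<lambda>n. scal (gseq n)) \<longlonglongrightarrow> 7"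
proof -
  have "(\<lambda>n. (224 * real n ^ 6 + 288 * real n ^ 5 - 32 * real n ^ 4 - 8 * real n ^ 2 - 1) / (32 * real n ^ 6)) \<longlonglongrightarrow> 7"
    by real_asymp
  moreover have "eventually (\<lambda>n. (224 * real n ^ 6 + 288 * real n ^ 5 - 32 * real n ^ 4 - 8 * real n ^ 2 - 1) / (32 * real n ^ 6) = scal (gseq n)) sequentially"
    unfolding eventually_sequentially using scal_gseq by (intro exI[of _ 1]) auto
  ultimately show ?thesis by (rule Lim_transform_eventually)
qed


theorem mainTheorem16:
  shows "(\<forall>n\<ge>1. gseq n \<in> M1)
    \<and> \<not> (\<exists>K. compact K \<and> K \<subseteq> M1 \<and> (\<forall>n\<ge>1. gseq n \<in> K))
    \<and> (\<exists>C. \<forall>n\<ge>1. \<forall>X\<in>mspace. \<forall>Y\<in>mspace.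
          gform (gseq n) X X * gform (gseq n) Y Y - (gform (gseq n) X Y)^2 \<noteq> 0
          \<longrightarrow> \<bar>seccurv (gseq n) X Y\<bar> \<le> C)
    \<and> (\<forall>n\<ge>1. scal (gseq n) =
          (224 * real n ^ 6 + 288 * real n ^ 5 - 32 * real n ^ 4 - 8 * real n ^ 2 - 1) / (32 * real n ^ 6))
    \<and> (\<lambda>n. scal (gseq n)) \<longlonglongrightarrow> 7"
  using gseq_M1 diverge curv_bounded scal_gseq scal_lim by blast

end
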